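(* There is a constant $C$, independent of $x,y,\xi$, such that for real $\xi\notin\{\pm k_1,\pm k_2,\pm\xi_1,\dots,\pm\xi_N\}$ and $y<x$ the following hold. (a) If $|\xi|>k_2$: $|R_{\xi,0^+}(x,y)|\le C(1+|\xi|)^{-1}e^{-\tilde B|x-y|}$ when $y<x<-d$, or $d<y<x$, or $y<-d<d<x$; and $|R_{\xi,0^+}(x,y)|\le C(1+|\xi|)^{-1}e^{-\tilde A|x-y|}$ in all other cases with $y<x$. (b) If $k_1<|\xi|<k_2$: $|R_{\xi,0^+}(x,y)|\le C\dfrac{e^{-\tilde B|x-y|}}{\sqrt{|\xi^2-k_1^2|}\prod_{n=1}^N|\xi^2-\xi_n^2|}$. (c) If $|\xi|<k_1$: $|R_{\xi,0^+}(x,y)|\le \dfrac{C}{\sqrt{|\xi^2-k_1^2|}}$. The analogous estimates hold for $x<y$ (with the roles of $x$ and $y$ interchanged).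
   Context: Let $0<k_1<k_2$, $d>0$, $q(x)=(k_2^2-k_1^2)\chi_{[-d,d]}(x)$, and $\tilde A=\sqrt{\xi^2-k_2^2}$, $\tilde B=\sqrt{\xi^2-k_1^2}$. Principal square root on $\mathbb{C}\setminus(-\infty,0]$. For $\xi\in\mathbb{R}$, $u_\pm(\xi,0^+;\cdot)$ are the solutions of $u''+(k_1^2+q(x)-\xi^2)u=0$ (with $u,u'$ continuous) with $u_\pm(\xi,0^+;x)=e^{\pm ix\sqrt{k_1^2-\xi^2}}$ for $\pm x>d$, where $\sqrt{k_1^2-\xi^2}:=i\sqrt{\xi^2-k_1^2}$ for $|\xi|>k_1$ (the $\delta\to0^+$ limit of $\sqrt{k_1^2-\xi^2+i\delta}$). $W(\xi,0^+)=u_-\partial_xu_+-u_+\partial_xu_-$ is their Wronskian. $\xi_1,\dots,\xi_N$ are the zeros of $W(\cdot,0^+)$ in $(k_1,k_2)$. The outgoing resolvent kernel of $\partial_x^2+k_1^2+q(x)-\xi^2$ is $R_{\xi,0^+}(x,y)=u_+(\xi,0^+;x)u_-(\xi,0^+;y)/W(\xi,0^+)$ for $y<x$ and $R_{\xi,0^+}(x,y)=u_-(\xi,0^+;x)u_+(\xi,0^+;y)/W(\xi,0^+)$ for $x<y$. *)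

theory Defs
  imports "HOL-Analysis.Analysis"
begin

definition qpot :: "real \<Rightarrow> real \<Rightarrow> real \<Rightarrow> real \<Rightarrow> real" where
  "qpot k1 k2 d x = (if x \<in> {-d..d} then k2\<^sup>2 - k1\<^sup>2 else 0)"

definition kappa :: "real \<Rightarrow> real \<Rightarrow> complex" where
  "kappa k1 \<xi> = (if \<bar>\<xi>\<bar> \<le> k1 then complex_of_real (sqrt (k1\<^sup>2 - \<xi>\<^sup>2))
                   else \<i> * complex_of_real (sqrt (\<xi>\<^sup>2 - k1\<^sup>2)))"

definition is_sol :: "real \<Rightarrow> real \<Rightarrow> real \<Rightarrow> real \<Rightarrow> (real \<Rightarrow> complex) \<Rightarrow> bool" where
  "is_sol k1 k2 d \<xi> u \<longleftrightarrow>
     (\<exists>u'. continuous_on UNIV u' \<and>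
        (\<forall>x. (u has_vector_derivative u' x) (at x)) \<and>
        (\<forall>x. x \<noteq> d \<and> x \<noteq> -d \<longrightarrow>
           (u' has_vector_derivative
              (complex_of_real (\<xi>\<^sup>2 - k1\<^sup>2 - qpot k1 k2 d x) * u x)) (at x)))"

definition u_plus :: "real \<Rightarrow> real \<Rightarrow> real \<Rightarrow> real \<Rightarrow> real \<Rightarrow> complex" where
  "u_plus k1 k2 d \<xi> = (THE u. is_sol k1 k2 d \<xi> u \<and>
      (\<forall>x. x > d \<longrightarrow> u x = exp (\<i> * complex_of_real x * kappa k1 \<xi>)))"

definition u_minus :: "real \<Rightarrow> real \<Rightarrow> real \<Rightarrow> real \<Rightarrow> real \<Rightarrow> complex" where
  "u_minus k1 k2 d \<xi> = (THE u. is_sol k1 k2 d \<xi> u \<and>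
      (\<forall>x. x < -d \<longrightarrow> u x = exp (- \<i> * complex_of_real x * kappa k1 \<xi>)))"

text \<open>Wronskian u_- u_+' - u_+ u_-' (independent of x; evaluated at x = 0).\<close>
definition wronsk :: "real \<Rightarrow> real \<Rightarrow> real \<Rightarrow> real \<Rightarrow> complex" where
  "wronsk k1 k2 d \<xi> =
     u_minus k1 k2 d \<xi> 0 * vector_derivative (u_plus k1 k2 d \<xi>) (at 0)
   - u_plus k1 k2 d \<xi> 0 * vector_derivative (u_minus k1 k2 d \<xi>) (at 0)"

definition wzeros :: "real \<Rightarrow> real \<Rightarrow> real \<Rightarrow> real set" where
  "wzeros k1 k2 d = {\<zeta>. k1 < \<zeta> \<and> \<zeta> < k2 \<and> wronsk k1 k2 d \<zeta> = 0}"

definition resolv :: "real \<Rightarrow> real \<Rightarrow> real \<Rightarrow> real \<Rightarrow> real \<Rightarrow> real \<Rightarrow> complex" where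
  "resolv k1 k2 d \<xi> x y =
     (if y < x then u_plus k1 k2 d \<xi> x * u_minus k1 k2 d \<xi> y / wronsk k1 k2 d \<xi>
      else u_minus k1 k2 d \<xi> x * u_plus k1 k2 d \<xi> y / wronsk k1 k2 d \<xi>)"

end

theory Submission
  imports Defs
begin


definition Gf :: "complex \<Rightarrow> real \<Rightarrow> complex \<Rightarrow> complex \<Rightarrow> real \<Rightarrow> complex" where
 "Gf \<nu> p a b t = a * cos (\<nu> * of_real (t - p)) + b * (sin (\<nu> * of_real (t - p)) / \<nu>)"
definition Gd :: "complex \<Rightarrow> real \<Rightarrow> complex \<Rightarrow> complex \<Rightarrow> real \<Rightarrow> complex" where
 "Gd \<nu> p a b t = b * cos (\<nu> * of_real (t - p)) - a * \<nu> * sin (\<nu> * of_real (t - p))"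

lemma Gf_deriv:
  assumes "\<nu> \<noteq> 0"
  shows "(Gf \<nu> p a b has_vector_derivative Gd \<nu> p a b t) (at t within S)"
proof -
  have "((\<lambda>z. a * cos (\<nu> * (z - of_real p)) + b * (sin (\<nu> * (z - of_real p)) / \<nu>)) has_field_derivative Gd \<nu> p a b t) (at (of_real t))"
    unfolding Gd_def using assms
    by (auto intro!: derivative_eq_intros simp: field_simps)
  from has_vector_derivative_real_field[OF this, of S]
  show ?thesis unfolding Gf_def by simp
qed

lemma Gd_deriv:
  shows "(Gd \<nu> p a b has_vector_derivative (- \<nu>\<^sup>2) * Gf \<nu> p a b t) (at t within S)"
proof (cases "\<nu> = 0")
  case True
  then show ?thesis unfolding Gd_def Gf_def by simp
next
  case False
  have "((\<lambda>z. b * cos (\<nu> * (z - of_real p)) - a * \<nu> * sin (\<nu> * (z - of_real p))) has_field_derivative (- \<nu>\<^sup>2) * Gf \<nu> p a b t) (at (of_real t))"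
    unfolding Gf_def using False
    by (auto intro!: derivative_eq_intros simp: field_simps power2_eq_square)
  from has_vector_derivative_real_field[OF this, of S]
  show ?thesis unfolding Gd_def by simp
qed


lemma deriv_glue:
  fixes g h :: "real \<Rightarrow> complex"
  assumes g: "\<And>t. (g has_vector_derivative g' t) (at t)"
    and h: "\<And>t. (h has_vector_derivative h' t) (at t)"
    and "g p = h p" "g' p = h' p"
  shows "((\<lambda>t. if t \<le> p then g t else h t) has_vector_derivative (if t \<le> p then g' t else h' t)) (at t)"
proof -
  have cl: "closure {..p} \<inter> closure {p<..} = {p}" by auto
  have "((\<lambda>t. if t \<in> {..p} then g t else h t) has_vector_derivative (if t \<in> {..p} then g' t else h' t)) (at t within UNIV)"
    apply (rule has_vector_derivative_If_within_closures[where T="{p<..}"])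
    using assms by (auto intro: has_vector_derivative_at_within simp: cl)
  then show ?thesis by simp
qed

lemma cont_glue:
  fixes g h :: "real \<Rightarrow> complex"
  assumes "continuous_on UNIV g" "continuous_on UNIV h" "g p = h p"
  shows "continuous_on UNIV (\<lambda>t. if t \<le> p then g t else h t)"
  apply (rule continuous_on_cases_le)
  using assms by (auto intro: continuous_on_subset continuous_on_id)

lemma Gf_cont: "\<nu> \<noteq> 0 \<Longrightarrow> continuous_on UNIV (Gf \<nu> p a b)"
  by (rule continuous_on_vector_derivative, rule Gf_deriv)

lemma Gd_cont: "continuous_on UNIV (Gd \<nu> p a b)"
  by (rule continuous_on_vector_derivative, rule Gd_deriv)

lemma Gf_p[simp]: "Gf \<nu> p a b p = a" by (simp add: Gf_def)
lemma Gd_p[simp]: "Gd \<nu> p a b p = b" by (simp add: Gd_def)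

definition "Ee \<kappa> d = exp (\<i> * of_real d * \<kappa>)"
definition "Pm \<kappa> \<mu> d = Gf \<mu> d (Ee \<kappa> d) (\<i> * \<kappa> * Ee \<kappa> d) (-d)"
definition "Qm \<kappa> \<mu> d = Gd \<mu> d (Ee \<kappa> d) (\<i> * \<kappa> * Ee \<kappa> d) (-d)"

definition Fp :: "complex \<Rightarrow> complex \<Rightarrow> real \<Rightarrow> real \<Rightarrow> complex" where
 "Fp \<kappa> \<mu> d t = (if t \<le> -d then Gf \<kappa> (-d) (Pm \<kappa> \<mu> d) (Qm \<kappa> \<mu> d) t
     else if t \<le> d then Gf \<mu> d (Ee \<kappa> d) (\<i> * \<kappa> * Ee \<kappa> d) t
     else Gf \<kappa> d (Ee \<kappa> d) (\<i> * \<kappa> * Ee \<kappa> d) t)"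
definition Fpd :: "complex \<Rightarrow> complex \<Rightarrow> real \<Rightarrow> real \<Rightarrow> complex" where
 "Fpd \<kappa> \<mu> d t = (if t \<le> -d then Gd \<kappa> (-d) (Pm \<kappa> \<mu> d) (Qm \<kappa> \<mu> d) t
     else if t \<le> d then Gd \<mu> d (Ee \<kappa> d) (\<i> * \<kappa> * Ee \<kappa> d) t
     else Gd \<kappa> d (Ee \<kappa> d) (\<i> * \<kappa> * Ee \<kappa> d) t)"

lemma Fp_deriv:
  assumes "\<kappa> \<noteq> 0" "\<mu> \<noteq> 0" "0 < d"
  shows "(Fp \<kappa> \<mu> d has_vector_derivative Fpd \<kappa> \<mu> d t) (at t)"
proof -
  let ?E = "Ee \<kappa> d"
  have inner: "((\<lambda>t. if t \<le> d then Gf \<mu> d ?E (\<i> * \<kappa> * ?E) t else Gf \<kappa> d ?E (\<i> * \<kappa> * ?E) t)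
     has_vector_derivative (if t \<le> d then Gd \<mu> d ?E (\<i> * \<kappa> * ?E) t else Gd \<kappa> d ?E (\<i> * \<kappa> * ?E) t)) (at t)" for t
    by (rule deriv_glue) (use assms in \<open>auto intro: Gf_deriv\<close>)
  have "((\<lambda>t. if t \<le> -d then Gf \<kappa> (-d) (Pm \<kappa> \<mu> d) (Qm \<kappa> \<mu> d) t else
          (if t \<le> d then Gf \<mu> d ?E (\<i> * \<kappa> * ?E) t else Gf \<kappa> d ?E (\<i> * \<kappa> * ?E) t))
     has_vector_derivative (if t \<le> -d then Gd \<kappa> (-d) (Pm \<kappa> \<mu> d) (Qm \<kappa> \<mu> d) t else
          (if t \<le> d then Gd \<mu> d ?E (\<i> * \<kappa> * ?E) t else Gd \<kappa> d ?E (\<i> * \<kappa> * ?E) t))) (at t)"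
    by (rule deriv_glue[OF _ inner]) (use assms in \<open>auto intro: Gf_deriv simp: Pm_def Qm_def\<close>)
  then show ?thesis unfolding Fp_def Fpd_def .
qed

lemma Fpd_cont:
  assumes "0 < d"
  shows "continuous_on UNIV (Fpd \<kappa> \<mu> d)"
proof -
  let ?E = "Ee \<kappa> d"
  have inner: "continuous_on UNIV (\<lambda>t. if t \<le> d then Gd \<mu> d ?E (\<i> * \<kappa> * ?E) t else Gd \<kappa> d ?E (\<i> * \<kappa> * ?E) t)"
    by (rule cont_glue) (auto intro: Gd_cont)
  have "continuous_on UNIV (\<lambda>t. if t \<le> -d then Gd \<kappa> (-d) (Pm \<kappa> \<mu> d) (Qm \<kappa> \<mu> d) t else
          (if t \<le> d then Gd \<mu> d ?E (\<i> * \<kappa> * ?E) t else Gd \<kappa> d ?E (\<i> * \<kappa> * ?E) t))"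
    by (rule cont_glue[OF _ inner]) (use assms in \<open>auto intro: Gd_cont simp: Qm_def\<close>)
  then show ?thesis unfolding Fpd_def .
qed

lemma Fpd_deriv:
  assumes "0 < d" "t \<noteq> d" "t \<noteq> -d"
  shows "(Fpd \<kappa> \<mu> d has_vector_derivative
     (if \<bar>t\<bar> < d then - \<mu>\<^sup>2 else - \<kappa>\<^sup>2) * Fp \<kappa> \<mu> d t) (at t)"
proof -
  let ?E = "Ee \<kappa> d"
  consider "t < -d" | "-d < t \<and> t < d" | "d < t" using assms by linarith
  then show ?thesis
  proof cases
    case 1
    have e: "(if \<bar>t\<bar> < d then - \<mu>\<^sup>2 else - \<kappa>\<^sup>2) * Fp \<kappa> \<mu> d t = - \<kappa>\<^sup>2 * Gf \<kappa> (-d) (Pm \<kappa> \<mu> d) (Qm \<kappa> \<mu> d) t"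
      using 1 by (auto simp: Fp_def)
    show ?thesis unfolding e
      apply (rule has_vector_derivative_transform_within_open[OF Gd_deriv, where S="{..< -d}"])
      using 1 assms by (auto simp: Fpd_def)
  next
    case 2
    have e: "(if \<bar>t\<bar> < d then - \<mu>\<^sup>2 else - \<kappa>\<^sup>2) * Fp \<kappa> \<mu> d t = - \<mu>\<^sup>2 * Gf \<mu> d ?E (\<i> * \<kappa> * ?E) t"
      using 2 by (auto simp: Fp_def)
    show ?thesis unfolding e
      apply (rule has_vector_derivative_transform_within_open[OF Gd_deriv, where S="{-d<..<d}"])
      using 2 assms by (auto simp: Fpd_def)
  next
    case 3
    have e: "(if \<bar>t\<bar> < d then - \<mu>\<^sup>2 else - \<kappa>\<^sup>2) * Fp \<kappa> \<mu> d t = - \<kappa>\<^sup>2 * Gf \<kappa> d ?E (\<i> * \<kappa> * ?E) t"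
      using 3 assms by (auto simp: Fp_def)
    show ?thesis unfolding e
      apply (rule has_vector_derivative_transform_within_open[OF Gd_deriv, where S="{d<..}"])
      using 3 assms by (auto simp: Fpd_def)
  qed
qed

lemma kappa_sq: "0 \<le> k \<Longrightarrow> (kappa k \<xi>)\<^sup>2 = of_real (k\<^sup>2 - \<xi>\<^sup>2)"
proof (cases "\<bar>\<xi>\<bar> \<le> k")
  case True
  assume "0 \<le> k"
  then have "\<xi>\<^sup>2 \<le> k\<^sup>2" using True abs_le_square_iff[of \<xi> k] by simp
  then have "(sqrt (k\<^sup>2 - \<xi>\<^sup>2))\<^sup>2 = k\<^sup>2 - \<xi>\<^sup>2" by simp
  then show ?thesis using True unfolding kappa_def by (simp flip: of_real_power)
next
  case False
  assume "0 \<le> k"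
  then have "k\<^sup>2 \<le> \<xi>\<^sup>2" using False abs_le_square_iff[of k \<xi>] by simp
  then have "(sqrt (\<xi>\<^sup>2 - k\<^sup>2))\<^sup>2 = \<xi>\<^sup>2 - k\<^sup>2" by simp
  then have "(\<i> * complex_of_real (sqrt (\<xi>\<^sup>2 - k\<^sup>2)))\<^sup>2 = - of_real (\<xi>\<^sup>2 - k\<^sup>2)"
    by (simp add: power_mult_distrib flip: of_real_power)
  then show ?thesis using False unfolding kappa_def by simp
qed

lemma abs_less_sq: "\<bar>x::real\<bar> < \<bar>y\<bar> \<longleftrightarrow> x\<^sup>2 < y\<^sup>2"
  using abs_le_square_iff[of y x] by linarith

lemma kappa_nz: "0 < k \<Longrightarrow> \<bar>\<xi>\<bar> \<noteq> k \<Longrightarrow> kappa k \<xi> \<noteq> 0"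
proof -
  assume a: "0 < k" "\<bar>\<xi>\<bar> \<noteq> k"
  show ?thesis
  proof (cases "\<bar>\<xi>\<bar> \<le> k")
    case True
    then have "\<xi>\<^sup>2 < k\<^sup>2" using a abs_less_sq[of \<xi> k] by simp
    then show ?thesis using True by (simp add: kappa_def)
  next
    case False
    then have "k\<^sup>2 < \<xi>\<^sup>2" using a abs_less_sq[of k \<xi>] by simp
    then show ?thesis using False by (simp add: kappa_def)
  qed
qed


lemma Gf_exp: "\<kappa> \<noteq> 0 \<Longrightarrow> Gf \<kappa> d (Ee \<kappa> d) (\<i> * \<kappa> * Ee \<kappa> d) t = exp (\<i> * of_real t * \<kappa>)"
proof -
  assume k: "\<kappa> \<noteq> 0"
  have "Gf \<kappa> d (Ee \<kappa> d) (\<i> * \<kappa> * Ee \<kappa> d) t = Ee \<kappa> d * (cos (\<kappa> * of_real (t - d)) + \<i> * sin (\<kappa> * of_real (t - d)))"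
    unfolding Gf_def using k by (simp add: field_simps)
  also have "\<dots> = Ee \<kappa> d * exp (\<i> * (\<kappa> * of_real (t - d)))" by (simp add: exp_Euler)
  also have "\<dots> = exp (\<i> * of_real t * \<kappa>)" unfolding Ee_def
    by (simp add: exp_add[symmetric] algebra_simps)
  finally show ?thesis .
qed

lemma sincos_c: "(sin (z::complex))\<^sup>2 + (cos z)\<^sup>2 = 1"
  by (rule sin_cos_squared_add)

lemma wr_zero:
  fixes w w' :: "real \<Rightarrow> complex"
  assumes nz: "\<nu> \<noteq> 0" and I: "convex I" and p: "p \<in> I"
    and cw: "continuous_on I w" and cw': "continuous_on I w'"
    and dw: "\<And>t. t \<in> I \<Longrightarrow> (w has_vector_derivative w' t) (at t)"
    and dw': "\<And>t. t \<in> I - {a, b} \<Longrightarrow> (w' has_vector_derivative (- \<nu>\<^sup>2) * w t) (at t)"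
    and w0: "w p = 0" and w'0: "w' p = 0"
    and t: "t \<in> I"
  shows "w t = 0"
proof -
  have Phi: "w t * Gd \<nu> p a0 b0 t - w' t * Gf \<nu> p a0 b0 t = 0" for a0 b0
  proof (rule has_derivative_zero_unique_strong_convex[OF I, of "{a,b}" _ p])
    show "continuous_on I (\<lambda>t. w t * Gd \<nu> p a0 b0 t - w' t * Gf \<nu> p a0 b0 t)"
      by (intro continuous_intros cw cw' continuous_on_subset[OF Gd_cont] continuous_on_subset[OF Gf_cont[OF nz]]) auto
    show "w p * Gd \<nu> p a0 b0 p - w' p * Gf \<nu> p a0 b0 p = 0" using w0 w'0 by simp
    fix x assume x: "x \<in> I - {a, b}"
    have "((\<lambda>t. w t * Gd \<nu> p a0 b0 t - w' t * Gf \<nu> p a0 b0 t) has_vector_derivative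
       (w x * ((- \<nu>\<^sup>2) * Gf \<nu> p a0 b0 x) + w' x * Gd \<nu> p a0 b0 x -
        (w' x * Gd \<nu> p a0 b0 x + (- \<nu>\<^sup>2) * w x * Gf \<nu> p a0 b0 x))) (at x within I)"
    proof -
      have a1: "(w has_vector_derivative w' x) (at x within I)" using x dw by (auto intro: has_vector_derivative_at_within)
      have a2: "(w' has_vector_derivative (- \<nu>\<^sup>2) * w x) (at x within I)" using x dw' by (auto intro: has_vector_derivative_at_within)
      show ?thesis
        by (rule has_vector_derivative_diff[OF has_vector_derivative_mult[OF a1 Gd_deriv] has_vector_derivative_mult[OF a2 Gf_deriv[OF nz]]])
    qed
    then have "((\<lambda>t. w t * Gd \<nu> p a0 b0 t - w' t * Gf \<nu> p a0 b0 t) has_vector_derivative 0) (at x within I)"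
      by (simp add: algebra_simps)
    then show "((\<lambda>t. w t * Gd \<nu> p a0 b0 t - w' t * Gf \<nu> p a0 b0 t) has_derivative (\<lambda>h. 0)) (at x within I)"
      by (simp add: has_vector_derivative_def)
  qed (use t p in auto)
  define c where "c = cos (\<nu> * of_real (t - p))"
  define s where "s = sin (\<nu> * of_real (t - p))"
  have e1: "w t * (- \<nu> * s) - w' t * c = 0" using Phi[of 1 0] unfolding Gd_def Gf_def c_def s_def by simp
  have e2: "w t * c - w' t * (s / \<nu>) = 0" using Phi[of 0 1] unfolding Gd_def Gf_def c_def s_def by simp
  have "w t * (s\<^sup>2 + c\<^sup>2) = 0"
  proof -
    have "w t * (s\<^sup>2 + c\<^sup>2) = - (s / \<nu>) * (w t * (- \<nu> * s) - w' t * c) + c * (w t * c - w' t * (s / \<nu>))"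
      using nz by (simp add: field_simps power2_eq_square)
    then show ?thesis using e1 e2 by simp
  qed
  then show ?thesis unfolding s_def c_def by (simp add: sincos_c)
qed

lemma closure_zero_right:
  fixes f :: "real \<Rightarrow> complex"
  assumes "continuous_on UNIV f" "\<And>t. t > d \<Longrightarrow> f t = 0"
  shows "f d = 0"
proof -
  have "closed (f -` {0})" using assms(1) by (intro closed_vimage) auto
  moreover have "{d<..} \<subseteq> f -` {0}" using assms(2) by auto
  ultimately have "closure {d<..} \<subseteq> f -` {0}" by (rule closure_minimal[rotated])
  then show ?thesis by auto
qed

lemma closure_zero_left:
  fixes f :: "real \<Rightarrow> complex"
  assumes "continuous_on UNIV f" "\<And>t. a < t \<Longrightarrow> t < b \<Longrightarrow> f t = 0" "a < b"
  shows "f a = 0"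
proof -
  have "closed (f -` {0})" using assms(1) by (intro closed_vimage) auto
  moreover have "{a<..<b} \<subseteq> f -` {0}" using assms(2) by auto
  ultimately have "closure {a<..<b} \<subseteq> f -` {0}" by (rule closure_minimal[rotated])
  then show ?thesis using assms(3) by (auto simp: subset_iff)
qed

lemma deriv_zero_local:
  fixes w :: "real \<Rightarrow> complex"
  assumes "(w has_vector_derivative D) (at t)" "open S" "t \<in> S" "\<And>y. y \<in> S \<Longrightarrow> w y = 0"
  shows "D = 0"
proof -
  have "((\<lambda>_. 0::complex) has_vector_derivative 0) (at t)" by simp
  then have "(w has_vector_derivative 0) (at t)"
    by (rule has_vector_derivative_transform_within_open[OF _ assms(2,3)]) (use assms(4) in auto)
  then show ?thesis using assms(1) vector_derivative_unique_at by blast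
qed

lemma qpot_in: "\<bar>t\<bar> \<le> d \<Longrightarrow> qpot k1 k2 d t = k2\<^sup>2 - k1\<^sup>2"
  by (auto simp: qpot_def)
lemma qpot_out: "\<bar>t\<bar> > d \<Longrightarrow> qpot k1 k2 d t = 0"
  by (auto simp: qpot_def)
lemma qpot_even: "qpot k1 k2 d (-t) = qpot k1 k2 d t"
  by (auto simp: qpot_def)

lemma Fp_sol:
  assumes "0 < k1" "k1 < k2" "0 < d" "\<bar>\<xi>\<bar> \<noteq> k1" "\<bar>\<xi>\<bar> \<noteq> k2"
  shows "is_sol k1 k2 d \<xi> (Fp (kappa k1 \<xi>) (kappa k2 \<xi>) d)"
proof -
  let ?k = "kappa k1 \<xi>" and ?m = "kappa k2 \<xi>"
  have nz: "?k \<noteq> 0" "?m \<noteq> 0" using assms kappa_nz by auto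
  have sq: "?k\<^sup>2 = of_real (k1\<^sup>2 - \<xi>\<^sup>2)" "?m\<^sup>2 = of_real (k2\<^sup>2 - \<xi>\<^sup>2)"
    using assms kappa_sq[of k1 \<xi>] kappa_sq[of k2 \<xi>] by auto
  show ?thesis unfolding is_sol_def
  proof (intro exI conjI allI impI)
    show "continuous_on UNIV (Fpd ?k ?m d)" using assms by (intro Fpd_cont)
    show "(Fp ?k ?m d has_vector_derivative Fpd ?k ?m d x) (at x)" for x
      using assms nz by (intro Fp_deriv)
    fix x assume x: "x \<noteq> d \<and> x \<noteq> - d"
    have "(if \<bar>x\<bar> < d then - ?m\<^sup>2 else - ?k\<^sup>2) = complex_of_real (\<xi>\<^sup>2 - k1\<^sup>2 - qpot k1 k2 d x)"
      using x sq by (auto simp: qpot_in qpot_out)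
    then show "(Fpd ?k ?m d has_vector_derivative complex_of_real (\<xi>\<^sup>2 - k1\<^sup>2 - qpot k1 k2 d x) * Fp ?k ?m d x) (at x)"
      using Fpd_deriv[of d x ?k ?m] assms x by auto
  qed
qed

lemma Fp_tail:
  assumes "\<kappa> \<noteq> 0" "0 < d" "d < x"
  shows "Fp \<kappa> \<mu> d x = exp (\<i> * of_real x * \<kappa>)"
  using assms Gf_exp[OF assms(1)] by (auto simp: Fp_def)

lemma Fp_unique:
  assumes "0 < k1" "k1 < k2" "0 < d" "\<bar>\<xi>\<bar> \<noteq> k1" "\<bar>\<xi>\<bar> \<noteq> k2"
    and sol: "is_sol k1 k2 d \<xi> u" and tl: "\<And>x. x > d \<Longrightarrow> u x = exp (\<i> * of_real x * kappa k1 \<xi>)"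
  shows "u = Fp (kappa k1 \<xi>) (kappa k2 \<xi>) d"
proof -
  let ?k = "kappa k1 \<xi>" and ?m = "kappa k2 \<xi>"
  have nz: "?k \<noteq> 0" "?m \<noteq> 0" using assms kappa_nz by auto
  have sq: "?k\<^sup>2 = of_real (k1\<^sup>2 - \<xi>\<^sup>2)" "?m\<^sup>2 = of_real (k2\<^sup>2 - \<xi>\<^sup>2)"
    using assms kappa_sq[of k1 \<xi>] kappa_sq[of k2 \<xi>] by auto
  obtain u' where cu': "continuous_on UNIV u'" and du: "\<And>x. (u has_vector_derivative u' x) (at x)"
    and du': "\<And>x. x \<noteq> d \<Longrightarrow> x \<noteq> -d \<Longrightarrow> (u' has_vector_derivative
              (complex_of_real (\<xi>\<^sup>2 - k1\<^sup>2 - qpot k1 k2 d x) * u x)) (at x)"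
    using sol unfolding is_sol_def by blast
  define w where "w t = u t - Fp ?k ?m d t" for t
  define w' where "w' t = u' t - Fpd ?k ?m d t" for t
  have cw: "continuous_on UNIV w"
  proof -
    have "continuous_on UNIV u" by (rule continuous_on_vector_derivative) (use du has_vector_derivative_at_within in blast)
    moreover have "continuous_on UNIV (Fp ?k ?m d)" by (rule continuous_on_vector_derivative) (use Fp_deriv[OF nz \<open>0<d\<close>] has_vector_derivative_at_within in blast)
    ultimately show ?thesis unfolding w_def by (intro continuous_on_diff)
  qed
  have cw': "continuous_on UNIV w'"
    unfolding w'_def using cu' Fpd_cont[OF \<open>0<d\<close>] by (intro continuous_on_diff)
  have dw: "(w has_vector_derivative w' t) (at t)" for t
    unfolding w_def w'_def using has_vector_derivative_diff[OF du Fp_deriv[OF nz \<open>0<d\<close>]] .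
  have dw'_in: "(w' has_vector_derivative (- ?m\<^sup>2) * w t) (at t)" if "\<bar>t\<bar> < d" for t
  proof -
    have e: "complex_of_real (\<xi>\<^sup>2 - k1\<^sup>2 - qpot k1 k2 d t) = - ?m\<^sup>2" using that sq by (auto simp: qpot_in)
    have "((\<lambda>t. u' t - Fpd ?k ?m d t) has_vector_derivative (- ?m\<^sup>2) * u t - (- ?m\<^sup>2) * Fp ?k ?m d t) (at t)"
      using has_vector_derivative_diff[OF du'[of t] Fpd_deriv[of d t ?k ?m]] that \<open>0<d\<close> e by auto
    then show ?thesis unfolding w'_def w_def by (simp add: algebra_simps)
  qed
  have dw'_out: "(w' has_vector_derivative (- ?k\<^sup>2) * w t) (at t)" if "\<bar>t\<bar> > d" for t
  proof -
    have e: "complex_of_real (\<xi>\<^sup>2 - k1\<^sup>2 - qpot k1 k2 d t) = - ?k\<^sup>2" using that sq by (auto simp: qpot_out)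
    have "((\<lambda>t. u' t - Fpd ?k ?m d t) has_vector_derivative (- ?k\<^sup>2) * u t - (- ?k\<^sup>2) * Fp ?k ?m d t) (at t)"
      using has_vector_derivative_diff[OF du'[of t] Fpd_deriv[of d t ?k ?m]] that \<open>0<d\<close> e by auto
    then show ?thesis unfolding w'_def w_def by (simp add: algebra_simps)
  qed
  have wR: "w t = 0" if "t > d" for t using that tl Fp_tail[OF nz(1) \<open>0<d\<close>, of t] by (simp add: w_def)
  have w'R: "w' t = 0" if "t > d" for t
    by (rule deriv_zero_local[OF dw, where S="{d<..}"]) (use that wR in auto)
  have wd: "w d = 0" by (rule closure_zero_right[OF cw wR])
  have w'd: "w' d = 0" by (rule closure_zero_right[OF cw' w'R])
  have wM: "w t = 0" if "t \<in> {-d..d}" for t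
    by (rule wr_zero[where \<nu>="?m" and I="{-d..d}" and p=d and a="-d" and b=d and w=w and w'=w'])
       (use that \<open>0<d\<close> wd w'd dw'_in nz dw continuous_on_subset[OF cw] continuous_on_subset[OF cw'] in auto)
  have w'M: "w' t = 0" if "t \<in> {-d<..<d}" for t
    by (rule deriv_zero_local[OF dw, where S="{-d<..<d}"]) (use that wM in auto)
  have wmd: "w' (-d) = 0" by (rule closure_zero_left[OF cw' _, of "-d" d]) (use w'M \<open>0<d\<close> in auto)
  have wL: "w t = 0" if "t \<in> {..-d}" for t
    by (rule wr_zero[where \<nu>="?k" and I="{..-d}" and p="-d" and a="-d" and b=d and w=w and w'=w'])
       (use that \<open>0<d\<close> wM wmd dw'_out nz dw continuous_on_subset[OF cw] continuous_on_subset[OF cw'] in auto)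
  have "w t = 0" for t
    using wR wM wL by (cases "t > d"; cases "t < -d") auto
  then show ?thesis unfolding w_def by auto
qed

lemma sol_reflect:
  assumes "is_sol k1 k2 d \<xi> u"
  shows "is_sol k1 k2 d \<xi> (\<lambda>t. u (-t))"
proof -
  obtain u' where cu': "continuous_on UNIV u'" and du: "\<And>x. (u has_vector_derivative u' x) (at x)"
    and du': "\<And>x. x \<noteq> d \<and> x \<noteq> -d \<Longrightarrow> (u' has_vector_derivative
              (complex_of_real (\<xi>\<^sup>2 - k1\<^sup>2 - qpot k1 k2 d x) * u x)) (at x)"
    using assms unfolding is_sol_def by blast
  have dm: "(uminus has_vector_derivative (-1)) (at (x::real))" for x
    by (rule derivative_eq_intros refl)+
  show ?thesis unfolding is_sol_def
  proof (intro exI[of _ "\<lambda>t. - u' (-t)"] conjI allI impI)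
    show "continuous_on UNIV (\<lambda>t. - u' (- t))"
      by (intro continuous_on_minus continuous_on_compose2[OF cu'] continuous_on_id) auto
    fix x
    have "((u \<circ> uminus) has_vector_derivative (-1) *\<^sub>R u' (-x)) (at x)"
      by (rule vector_diff_chain_at[OF dm du])
    then show "((\<lambda>t. u (- t)) has_vector_derivative - u' (- x)) (at x)" by (simp add: o_def)
    assume x: "x \<noteq> d \<and> x \<noteq> - d"
    have "((u' \<circ> uminus) has_vector_derivative (-1) *\<^sub>R (complex_of_real (\<xi>\<^sup>2 - k1\<^sup>2 - qpot k1 k2 d (-x)) * u (-x))) (at x)"
      by (rule vector_diff_chain_at[OF dm du']) (use x in auto)
    then have "((\<lambda>t. - (u' \<circ> uminus) t) has_vector_derivative - ((-1) *\<^sub>R (complex_of_real (\<xi>\<^sup>2 - k1\<^sup>2 - qpot k1 k2 d (-x)) * u (-x)))) (at x)"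
      by (rule has_vector_derivative_minus)
    then show "((\<lambda>t. - u' (- t)) has_vector_derivative complex_of_real (\<xi>\<^sup>2 - k1\<^sup>2 - qpot k1 k2 d x) * u (- x)) (at x)"
      by (simp add: o_def qpot_even)
  qed
qed

lemma u_plus_eq:
  assumes "0 < k1" "k1 < k2" "0 < d" "\<bar>\<xi>\<bar> \<noteq> k1" "\<bar>\<xi>\<bar> \<noteq> k2"
  shows "u_plus k1 k2 d \<xi> = Fp (kappa k1 \<xi>) (kappa k2 \<xi>) d"
  unfolding u_plus_def
proof (rule the_equality)
  have nz: "kappa k1 \<xi> \<noteq> 0" using assms kappa_nz by auto
  show "is_sol k1 k2 d \<xi> (Fp (kappa k1 \<xi>) (kappa k2 \<xi>) d) \<and>
    (\<forall>x>d. Fp (kappa k1 \<xi>) (kappa k2 \<xi>) d x = exp (\<i> * complex_of_real x * kappa k1 \<xi>))"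
    using Fp_sol[OF assms] Fp_tail[OF nz \<open>0<d\<close>] by auto
  show "\<And>u. is_sol k1 k2 d \<xi> u \<and> (\<forall>x>d. u x = exp (\<i> * complex_of_real x * kappa k1 \<xi>)) \<Longrightarrow>
         u = Fp (kappa k1 \<xi>) (kappa k2 \<xi>) d"
    using Fp_unique[OF assms] by blast
qed

lemma u_minus_eq:
  assumes "0 < k1" "k1 < k2" "0 < d" "\<bar>\<xi>\<bar> \<noteq> k1" "\<bar>\<xi>\<bar> \<noteq> k2"
  shows "u_minus k1 k2 d \<xi> = (\<lambda>t. Fp (kappa k1 \<xi>) (kappa k2 \<xi>) d (-t))"
  unfolding u_minus_def
proof (rule the_equality)
  have nz: "kappa k1 \<xi> \<noteq> 0" using assms kappa_nz by auto
  show "is_sol k1 k2 d \<xi> (\<lambda>t. Fp (kappa k1 \<xi>) (kappa k2 \<xi>) d (-t)) \<and>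
    (\<forall>x< -d. Fp (kappa k1 \<xi>) (kappa k2 \<xi>) d (-x) = exp (- \<i> * complex_of_real x * kappa k1 \<xi>))"
    using sol_reflect[OF Fp_sol[OF assms]] Fp_tail[OF nz \<open>0<d\<close>] by auto
  fix v assume v: "is_sol k1 k2 d \<xi> v \<and> (\<forall>x< -d. v x = exp (- \<i> * complex_of_real x * kappa k1 \<xi>))"
  have "(\<lambda>t. v (-t)) = Fp (kappa k1 \<xi>) (kappa k2 \<xi>) d"
    by (rule Fp_unique[OF assms sol_reflect]) (use v in auto)
  then show "v = (\<lambda>t. Fp (kappa k1 \<xi>) (kappa k2 \<xi>) d (-t))"
    by (metis minus_minus)
qed

lemma wronsk_eq:
  assumes "0 < k1" "k1 < k2" "0 < d" "\<bar>\<xi>\<bar> \<noteq> k1" "\<bar>\<xi>\<bar> \<noteq> k2"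
  shows "wronsk k1 k2 d \<xi> = 2 * Fp (kappa k1 \<xi>) (kappa k2 \<xi>) d 0 * Fpd (kappa k1 \<xi>) (kappa k2 \<xi>) d 0"
proof -
  let ?k = "kappa k1 \<xi>" and ?m = "kappa k2 \<xi>"
  have nz: "?k \<noteq> 0" "?m \<noteq> 0" using assms kappa_nz by auto
  have d1: "vector_derivative (Fp ?k ?m d) (at 0) = Fpd ?k ?m d 0"
    by (rule vector_derivative_at[OF Fp_deriv[OF nz \<open>0<d\<close>]])
  have dm: "(uminus has_vector_derivative (-1)) (at (x::real))" for x
    by (rule derivative_eq_intros refl)+
  have "((Fp ?k ?m d \<circ> uminus) has_vector_derivative (-1) *\<^sub>R Fpd ?k ?m d (-0)) (at 0)"
    by (rule vector_diff_chain_at[OF dm Fp_deriv[OF nz \<open>0<d\<close>]])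
  then have d2: "vector_derivative (\<lambda>t. Fp ?k ?m d (-t)) (at 0) = - Fpd ?k ?m d 0"
    by (intro vector_derivative_at) (simp add: o_def)
  show ?thesis unfolding wronsk_def u_plus_eq[OF assms] u_minus_eq[OF assms] d1 d2 by simp
qed

lemma resolv_eq:
  assumes "0 < k1" "k1 < k2" "0 < d" "\<bar>\<xi>\<bar> \<noteq> k1" "\<bar>\<xi>\<bar> \<noteq> k2" "x \<noteq> y"
  shows "resolv k1 k2 d \<xi> x y = Fp (kappa k1 \<xi>) (kappa k2 \<xi>) d (max x y) * Fp (kappa k1 \<xi>) (kappa k2 \<xi>) d (- min x y) / wronsk k1 k2 d \<xi>"
  unfolding resolv_def u_plus_eq[OF assms(1-5)] u_minus_eq[OF assms(1-5)]
  using assms(6) by (auto simp: max_def min_def mult.commute)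


lemma Fp_R: "0 < d \<Longrightarrow> \<kappa> \<noteq> 0 \<Longrightarrow> d \<le> t \<Longrightarrow> Fp \<kappa> \<mu> d t = exp (\<i> * of_real t * \<kappa>)"
  using Gf_exp[of \<kappa> d t] by (cases "t = d") (auto simp: Fp_def Ee_def)

lemma Fp_M: "0 < d \<Longrightarrow> -d \<le> t \<Longrightarrow> t \<le> d \<Longrightarrow> Fp \<kappa> \<mu> d t = Gf \<mu> d (Ee \<kappa> d) (\<i> * \<kappa> * Ee \<kappa> d) t"
  by (cases "t = -d") (auto simp: Fp_def Pm_def)

lemma Fp_L: "t \<le> -d \<Longrightarrow> Fp \<kappa> \<mu> d t = Gf \<kappa> (-d) (Pm \<kappa> \<mu> d) (Qm \<kappa> \<mu> d) t"
  by (auto simp: Fp_def)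

lemma Fpd_0: "0 < d \<Longrightarrow> Fpd \<kappa> \<mu> d 0 = Gd \<mu> d (Ee \<kappa> d) (\<i> * \<kappa> * Ee \<kappa> d) 0"
  by (auto simp: Fpd_def)

lemma Pm_Fp: "0 < d \<Longrightarrow> Pm \<kappa> \<mu> d = Fp \<kappa> \<mu> d (-d)"
  by (simp add: Fp_L Gf_def)

lemma norm_ri: "norm (complex_of_real x + \<i> * complex_of_real y) = sqrt (x\<^sup>2 + y\<^sup>2)"
  by (simp add: cmod_def)

lemma Gf_real: "Gf (complex_of_real \<nu>) p a b t = a * of_real (cos (\<nu> * (t - p))) + b * of_real (sin (\<nu> * (t - p)) / \<nu>)"
  unfolding Gf_def of_real_diff[symmetric] of_real_mult[symmetric] cos_of_real sin_of_real by simp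

lemma Gd_real: "Gd (complex_of_real \<nu>) p a b t = b * of_real (cos (\<nu> * (t - p))) - a * of_real (\<nu> * sin (\<nu> * (t - p)))"
  unfolding Gd_def of_real_diff[symmetric] of_real_mult[symmetric] cos_of_real sin_of_real by simp

lemma sin_div_le: "0 < (\<nu>::real) \<Longrightarrow> \<bar>sin (\<nu> * x) / \<nu>\<bar> \<le> \<bar>x\<bar>"
  using abs_sin_x_le_abs_x[of "\<nu> * x"] by (simp add: abs_mult divide_le_eq mult.commute)

lemma bound_c:
  fixes kr mr d a b :: real
  assumes kr: "0 < kr" and mr: "0 < mr" and d: "0 < d" and ab: "a < b"
  defines "F \<equiv> Fp (of_real kr) (of_real mr) d"
  defines "W \<equiv> 2 * Fp (of_real kr) (of_real mr) d 0 * Fpd (of_real kr) (of_real mr) d 0"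
  shows "norm (F b) * norm (F (-a)) \<le> (1 + 2*d*kr) * (2 + 2*d*kr) / kr * norm W"
proof -
  let ?k = "complex_of_real kr" and ?m = "complex_of_real mr"
  define E where "E = Ee ?k d"
  have nE: "norm E = 1" unfolding E_def Ee_def
    by (metis mult.commute mult.left_commute norm_exp_i_times of_real_mult)
  have knz: "?k \<noteq> 0" using kr by simp
  have hR: "norm (F t) = 1" if "d \<le> t" for t
    unfolding F_def using Fp_R[OF d knz that] by (metis mult.assoc norm_exp_i_times of_real_mult)
  have hM: "norm (F t) \<le> 1 + 2*d*kr" if "-d \<le> t" "t \<le> d" for t
  proof -
    have "F t = E * of_real (cos (mr * (t - d))) + \<i> * ?k * E * of_real (sin (mr * (t - d)) / mr)"
      unfolding F_def E_def using Fp_M[OF d that] by (simp add: Gf_real)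
    also have "norm \<dots> \<le> norm (E * of_real (cos (mr * (t - d)))) + norm (\<i> * ?k * E * of_real (sin (mr * (t - d)) / mr))"
      by (rule norm_triangle_ineq)
    also have "\<dots> = \<bar>cos (mr * (t - d))\<bar> + kr * \<bar>sin (mr * (t - d)) / mr\<bar>"
      using nE kr by (simp add: norm_mult norm_divide)
    also have "\<dots> \<le> 1 + kr * (2 * d)"
      using sin_div_le[OF mr, of "t - d"] that kr
      by (intro add_mono mult_left_mono) (auto simp: abs_le_iff)
    finally show ?thesis by (simp add: mult_ac)
  qed
  define c where "c = cos (mr * d)"
  define s where "s = sin (mr * d)"
  have F0: "F 0 = E * (of_real c + \<i> * of_real (- kr * s / mr))"
    unfolding F_def using Fp_M[OF d, of 0] d by (simp add: Gf_real c_def s_def E_def algebra_simps)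
  have Fd0: "Fpd ?k ?m d 0 = E * (of_real (mr * s) + \<i> * of_real (kr * c))"
    using Fpd_0[OF d] by (simp add: Gd_real c_def s_def E_def algebra_simps)
  have nW: "norm W = 2 * sqrt (c\<^sup>2 + (kr * s / mr)\<^sup>2) * sqrt ((mr * s)\<^sup>2 + (kr * c)\<^sup>2)"
    unfolding W_def F_def[symmetric] F0 Fd0
    by (simp only: norm_mult norm_ri nE) simp
  have cs: "c\<^sup>2 + s\<^sup>2 = 1" unfolding c_def s_def by simp
  have prod_eq: "(c\<^sup>2 + (kr * s / mr)\<^sup>2) * ((mr * s)\<^sup>2 + (kr * c)\<^sup>2) = (kr * c\<^sup>2 + kr * s\<^sup>2)\<^sup>2 + (c * mr * s - kr * s / mr * kr * c)\<^sup>2"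
    using mr by (simp add: field_simps power2_eq_square)
  have W1: "norm W \<ge> 2 * kr"
  proof -
    have "(kr * c\<^sup>2 + kr * s\<^sup>2)\<^sup>2 = kr\<^sup>2" using cs by (simp add: algebra_simps flip: distrib_left)
    then have "kr\<^sup>2 \<le> (c\<^sup>2 + (kr * s / mr)\<^sup>2) * ((mr * s)\<^sup>2 + (kr * c)\<^sup>2)" using prod_eq by simp
    then have "sqrt (kr\<^sup>2) \<le> sqrt ((c\<^sup>2 + (kr * s / mr)\<^sup>2) * ((mr * s)\<^sup>2 + (kr * c)\<^sup>2))" by (rule real_sqrt_le_mono)
    then show ?thesis using kr unfolding nW by (simp add: real_sqrt_mult)
  qed
  have W2: "norm W \<ge> mr * \<bar>sin (2 * mr * d)\<bar>"
  proof -
    have sd: "sin (2 * mr * d) = 2 * s * c" unfolding s_def c_def using sin_double[of "mr * d"] by (simp add: mult_ac)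
    have "(mr * \<bar>sin (2 * mr * d)\<bar>)\<^sup>2 = (2 * \<bar>c\<bar> * \<bar>mr * s\<bar>)\<^sup>2"
      unfolding sd using mr by (simp add: abs_mult power2_eq_square mult_ac)
    also have "\<dots> \<le> (2 * sqrt (c\<^sup>2 + (kr * s / mr)\<^sup>2) * sqrt ((mr * s)\<^sup>2 + (kr * c)\<^sup>2))\<^sup>2"
    proof -
      have "\<bar>c\<bar> \<le> sqrt (c\<^sup>2 + (kr * s / mr)\<^sup>2)" by (rule real_le_rsqrt) simp
      moreover have "\<bar>mr * s\<bar> \<le> sqrt ((mr * s)\<^sup>2 + (kr * c)\<^sup>2)" by (rule real_le_rsqrt) simp
      ultimately have "2 * \<bar>c\<bar> * \<bar>mr * s\<bar> \<le> 2 * sqrt (c\<^sup>2 + (kr * s / mr)\<^sup>2) * sqrt ((mr * s)\<^sup>2 + (kr * c)\<^sup>2)"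
        by (intro mult_mono) auto
      then show ?thesis by (intro power_mono) auto
    qed
    finally show ?thesis unfolding nW[symmetric] using mr by (simp add: power2_le_iff_abs_le[symmetric] abs_le_square_iff)
  qed
  have Qb: "norm (Qm ?k ?m d) \<le> kr + norm W"
  proof -
    have "Qm ?k ?m d = \<i> * ?k * E * of_real (cos (2 * mr * d)) + E * of_real (mr * sin (2 * mr * d))"
      unfolding Qm_def E_def by (simp add: Gd_real algebra_simps)
    also have "norm \<dots> \<le> kr * \<bar>cos (2 * mr * d)\<bar> + mr * \<bar>sin (2 * mr * d)\<bar>"
      using norm_triangle_ineq[of "\<i> * ?k * E * of_real (cos (2 * mr * d))" "E * of_real (mr * sin (2 * mr * d))"]
        nE kr mr by (simp add: norm_mult abs_mult)
    also have "\<dots> \<le> kr * 1 + norm W"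
      using W2 kr by (intro add_mono mult_left_mono) auto
    finally show ?thesis by simp
  qed
  have hL: "norm (F t) \<le> (2 + 2*d*kr) / kr * norm W" if "t \<le> -d" for t
  proof -
    have "F t = Pm ?k ?m d * of_real (cos (kr * (t + d))) + Qm ?k ?m d * of_real (sin (kr * (t + d)) / kr)"
      unfolding F_def using Fp_L[OF that] by (simp add: Gf_real)
    also have "norm \<dots> \<le> norm (Pm ?k ?m d) * \<bar>cos (kr * (t + d))\<bar> + norm (Qm ?k ?m d) * (\<bar>sin (kr * (t + d))\<bar> / kr)"
      using norm_triangle_ineq[of "Pm ?k ?m d * of_real (cos (kr * (t + d)))" "Qm ?k ?m d * of_real (sin (kr * (t + d)) / kr)"] kr
      by (simp add: norm_mult norm_divide)
    also have "\<dots> \<le> (1 + 2*d*kr) * 1 + (kr + norm W) * (1 / kr)"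
    proof (intro add_mono mult_mono)
      show "norm (Pm ?k ?m d) \<le> 1 + 2 * d * kr" unfolding Pm_Fp[OF d] F_def[symmetric] using hM d by simp
      show "\<bar>sin (kr * (t + d))\<bar> / kr \<le> 1 / kr" using kr by (simp add: divide_right_mono)
    qed (use Qb kr d in auto)
    also have "\<dots> = (2 + 2*d*kr) + norm W / kr" using kr by (simp add: field_simps)
    also have "\<dots> \<le> (2 + 2*d*kr) * (norm W / (2*kr)) + norm W / kr"
    proof -
      have "1 \<le> norm W / (2 * kr)" using W1 kr by simp
      then have "(2 + 2*d*kr) * 1 \<le> (2 + 2*d*kr) * (norm W / (2*kr))" using kr d by (intro mult_left_mono) auto
      then show ?thesis by simp
    qed
    also have "\<dots> \<le> (2 + 2*d*kr) / kr * norm W" using kr d by (simp add: field_simps)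
    finally show ?thesis .
  qed
  have Wk: "1 \<le> norm W / (2 * kr)" using W1 kr by simp
  have hAll: "norm (F t) \<le> (2 + 2*d*kr) / kr * norm W" for t
  proof (cases "t \<le> -d")
    case True then show ?thesis by (rule hL)
  next
    case False
    then have "norm (F t) \<le> 1 + 2*d*kr" using hM hR d mult_pos_pos[OF d kr] by (cases "t \<le> d") force+
    also have "\<dots> \<le> (2 + 2*d*kr) * 1" by simp
    also have "\<dots> \<le> (2 + 2*d*kr) * (norm W / (2*kr))" using Wk kr d
      by (intro mult_left_mono) auto
    also have "\<dots> \<le> (2 + 2*d*kr) / kr * norm W" using kr d W1 by (simp add: field_simps)
    finally show ?thesis .
  qed
  show ?thesis
  proof (cases "b < -d")
    case True
    then have "norm (F (-a)) = 1" using hR ab by simp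
    then have "norm (F b) * norm (F (-a)) \<le> (2 + 2*d*kr) / kr * norm W" using hAll by simp
    also have "\<dots> = 1 * ((2 + 2*d*kr) / kr * norm W)" by simp
    also have "\<dots> \<le> (1 + 2*d*kr) * ((2 + 2*d*kr) / kr * norm W)"
      using kr d by (intro mult_right_mono) auto
    finally show ?thesis by (simp add: field_simps)
  next
    case False
    then have "norm (F b) \<le> 1 + 2*d*kr" using hM hR d mult_pos_pos[OF d kr] by (cases "b \<le> d") force+
    then have "norm (F b) * norm (F (-a)) \<le> (1 + 2*d*kr) * ((2 + 2*d*kr) / kr * norm W)"
      using hAll mult_pos_pos[OF d kr] by (intro mult_mono) auto
    then show ?thesis by (simp add: field_simps)
  qed
qed


lemma outer_core:
  fixes f :: "real \<Rightarrow> real"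
  assumes B: "0 < B" and d: "0 < d" and ab: "a < b"
    and fR: "\<And>t. d \<le> t \<Longrightarrow> f t = exp (- B * t)"
    and fL: "\<And>t. t \<le> -d \<Longrightarrow> f t = \<alpha> * exp (B * (t + d)) + \<beta> * exp (- B * (t + d))"
    and ha: "\<bar>\<alpha>\<bar> \<le> \<rho> * exp (B * d) * w" and hb: "\<bar>\<beta>\<bar> \<le> exp (B * d) * w / (2 * B)"
    and rho: "0 \<le> \<rho>" and w: "0 \<le> w"
    and outer: "b \<le> -d \<or> d \<le> a \<or> (a \<le> -d \<and> d \<le> b)"
  shows "\<bar>f b\<bar> * \<bar>f (-a)\<bar> \<le> exp (- B * (b - a)) * max 1 (w * (\<rho> + 1 / (2 * B)))"
proof -
  have Lb: "\<bar>f t\<bar> \<le> \<rho> * w * exp (B * (t + 2 * d)) + w / (2 * B) * exp (- B * t)" if "t \<le> -d" for t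
  proof -
    have "\<bar>f t\<bar> \<le> \<bar>\<alpha>\<bar> * exp (B * (t + d)) + \<bar>\<beta>\<bar> * exp (- B * (t + d))"
      using fL[OF that] abs_triangle_ineq[of "\<alpha> * exp (B * (t + d))" "\<beta> * exp (- B * (t + d))"]
      by (simp add: abs_mult)
    also have "\<dots> \<le> (\<rho> * exp (B * d) * w) * exp (B * (t + d)) + (exp (B * d) * w / (2 * B)) * exp (- B * (t + d))"
      by (intro add_mono mult_right_mono ha hb) auto
    also have "\<dots> = \<rho> * w * (exp (B * d) * exp (B * (t + d))) + w / (2 * B) * (exp (B * d) * exp (- B * (t + d)))"
      by (simp add: algebra_simps)
    also have "\<dots> = \<rho> * w * exp (B * (t + 2 * d)) + w / (2 * B) * exp (- B * t)"
      by (simp add: exp_add[symmetric] algebra_simps)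
    finally show ?thesis .
  qed
  have M1: "max 1 (w * (\<rho> + 1 / (2 * B))) \<ge> w * (\<rho> + 1 / (2 * B))" by simp
  consider "b \<le> -d" | "d \<le> a" | "a \<le> -d \<and> d \<le> b" using outer by blast
  then show ?thesis
  proof cases
    case 1
    have fa: "\<bar>f (-a)\<bar> = exp (B * a)" using fR[of "-a"] 1 ab by simp
    have "\<bar>f b\<bar> * \<bar>f (-a)\<bar> \<le> (\<rho> * w * exp (B * (b + 2 * d)) + w / (2 * B) * exp (- B * b)) * exp (B * a)"
      unfolding fa by (intro mult_right_mono Lb 1) auto
    also have "\<dots> = \<rho> * w * exp (B * (a + b + 2 * d)) + w / (2 * B) * exp (- B * (b - a))"
      by (simp add: algebra_simps exp_add[symmetric])
    also have "\<dots> \<le> \<rho> * w * exp (- B * (b - a)) + w / (2 * B) * exp (- B * (b - a))"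
      using 1 B rho w mult_nonneg_nonpos[of B "b + d"] by (intro add_mono mult_left_mono) (auto simp: algebra_simps)
    also have "\<dots> = exp (- B * (b - a)) * (w * (\<rho> + 1 / (2 * B)))" by (simp add: algebra_simps)
    also have "\<dots> \<le> exp (- B * (b - a)) * max 1 (w * (\<rho> + 1 / (2 * B)))"
      by (intro mult_left_mono M1) auto
    finally show ?thesis .
  next
    case 2
    have fb: "\<bar>f b\<bar> = exp (- B * b)" using fR[of b] 2 ab by simp
    have "\<bar>f b\<bar> * \<bar>f (-a)\<bar> \<le> exp (- B * b) * (\<rho> * w * exp (B * (-a + 2 * d)) + w / (2 * B) * exp (- B * (-a)))"
      unfolding fb using 2 by (intro mult_left_mono Lb) auto
    also have "\<dots> = \<rho> * w * exp (B * (2 * d - a - b)) + w / (2 * B) * exp (- B * (b - a))"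
      by (simp add: algebra_simps exp_add[symmetric])
    also have "\<dots> \<le> \<rho> * w * exp (- B * (b - a)) + w / (2 * B) * exp (- B * (b - a))"
      using 2 B rho w mult_nonneg_nonpos[of B "d - a"] by (intro add_mono mult_left_mono) (auto simp: algebra_simps)
    also have "\<dots> = exp (- B * (b - a)) * (w * (\<rho> + 1 / (2 * B)))" by (simp add: algebra_simps)
    also have "\<dots> \<le> exp (- B * (b - a)) * max 1 (w * (\<rho> + 1 / (2 * B)))"
      by (intro mult_left_mono M1) auto
    finally show ?thesis .
  next
    case 3
    have "\<bar>f b\<bar> * \<bar>f (-a)\<bar> = exp (- B * b) * exp (B * a)" using fR[of b] fR[of "-a"] 3 by simp
    also have "\<dots> = exp (- B * (b - a)) * 1" by (simp add: algebra_simps exp_add[symmetric])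
    also have "\<dots> \<le> exp (- B * (b - a)) * max 1 (w * (\<rho> + 1 / (2 * B)))"
      by (intro mult_left_mono) auto
    finally show ?thesis .
  qed
qed

lemma ccosh: "cos (\<i> * complex_of_real x) = of_real (cosh x)"
proof -
  have "cos (\<i> * complex_of_real x) = cosh (complex_of_real x)" by (simp add: cosh_conv_cos)
  also have "\<dots> = of_real (cosh x)" by (simp add: cosh_field_def exp_of_real flip: of_real_minus)
  finally show ?thesis .
qed

lemma csinh: "sin (\<i> * complex_of_real x) = \<i> * of_real (sinh x)"
proof -
  have "sin (\<i> * complex_of_real x) = \<i> * sinh (complex_of_real x)" by (simp add: sinh_conv_sin)
  also have "sinh (complex_of_real x) = of_real (sinh x)" by (simp add: sinh_field_def exp_of_real flip: of_real_minus)
  finally show ?thesis by simp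
qed

lemma Gf_imag: "B \<noteq> 0 \<Longrightarrow> Gf (\<i> * complex_of_real B) p a b t = a * of_real (cosh (B * (t - p))) + b * of_real (sinh (B * (t - p)) / B)"
proof -
  assume B: "B \<noteq> 0"
  have e: "\<i> * complex_of_real B * complex_of_real (t - p) = \<i> * complex_of_real (B * (t - p))" by simp
  show ?thesis unfolding Gf_def e ccosh csinh using B by (simp add: field_simps)
qed

lemma Gd_imag: "Gd (\<i> * complex_of_real B) p a b t = b * of_real (cosh (B * (t - p))) + a * of_real (B * sinh (B * (t - p)))"
proof -
  have e: "\<i> * complex_of_real B * complex_of_real (t - p) = \<i> * complex_of_real (B * (t - p))" by simp
  show ?thesis unfolding Gd_def e ccosh csinh by (simp add: field_simps)
qed

lemma exp_imag: "exp (\<i> * complex_of_real t * (\<i> * complex_of_real B)) = of_real (exp (- B * t))"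
proof -
  have "\<i> * complex_of_real t * (\<i> * complex_of_real B) = of_real (- B * t)" by (simp add: algebra_simps)
  then show ?thesis by (simp only: exp_of_real)
qed

lemma Ee_imag: "Ee (\<i> * complex_of_real B) d = of_real (exp (- B * d))"
  unfolding Ee_def by (rule exp_imag)

lemma cosh_exp: "cosh (x::real) = (exp x + exp (- x)) / 2" by (simp add: cosh_field_def)
lemma sinh_exp: "sinh (x::real) = (exp x - exp (- x)) / 2" by (simp add: sinh_field_def)

lemma cs_exp: "B \<noteq> 0 \<Longrightarrow> P * cosh (x::real) + Q * (sinh x / B) = ((P + Q / B) / 2) * exp x + ((P - Q / B) / 2) * exp (- x)"
  unfolding cosh_exp sinh_exp by (simp add: field_simps)

lemma regb_pieces:
  fixes B m d :: real
  assumes B: "0 < B" and m: "0 < m" and d: "0 < d"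
  defines "F \<equiv> Fp (\<i> * complex_of_real B) (complex_of_real m) d"
  defines "E \<equiv> exp (- B * d)"
  defines "Ev \<equiv> cos (m * d) + B * sin (m * d) / m"
  defines "Od \<equiv> m * sin (m * d) - B * cos (m * d)"
  shows "\<And>t. d \<le> t \<Longrightarrow> F t = of_real (exp (- B * t))"
    and "\<And>t. -d \<le> t \<Longrightarrow> t \<le> d \<Longrightarrow> F t = of_real (E * (cos (m * (t - d)) - B * (sin (m * (t - d)) / m)))"
    and "\<And>t. t \<le> -d \<Longrightarrow> F t = of_real ((E * (B\<^sup>2 + m\<^sup>2) * (sin (2 * m * d) / m) / (2 * B)) * exp (B * (t + d))
                                          + (- E * Ev * Od / B) * exp (- B * (t + d)))"
    and "2 * F 0 * Fpd (\<i> * complex_of_real B) (complex_of_real m) d 0 = of_real (2 * E\<^sup>2 * Ev * Od)"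
proof -
  let ?k = "\<i> * complex_of_real B" and ?m = "complex_of_real m"
  have knz: "?k \<noteq> 0" using B by simp
  have EE: "Ee ?k d = of_real E" unfolding E_def by (rule Ee_imag)
  have ik: "\<i> * ?k * of_real E = of_real (- B * E)" by simp
  show "F t = of_real (exp (- B * t))" if "d \<le> t" for t
    unfolding F_def using Fp_R[OF d knz that] exp_imag by simp
  show FM: "F t = of_real (E * (cos (m * (t - d)) - B * (sin (m * (t - d)) / m)))" if "-d \<le> t" "t \<le> d" for t
    unfolding F_def Fp_M[OF d that] EE ik Gf_real by (simp add: algebra_simps)
  define c where "c = cos (m * d)"
  define s where "s = sin (m * d)"
  have c2: "cos (2 * m * d) = c\<^sup>2 - s\<^sup>2" unfolding c_def s_def using cos_double[of "m * d"] by (simp add: mult.assoc)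
  have s2: "sin (2 * m * d) = 2 * s * c" unfolding c_def s_def using sin_double[of "m * d"] by (simp add: mult.assoc)
  define P where "P = E * (cos (2 * m * d) + B * (sin (2 * m * d) / m))"
  define Q where "Q = E * (m * sin (2 * m * d) - B * cos (2 * m * d))"
  have Pm: "Pm ?k ?m d = of_real P"
    unfolding Pm_def EE ik Gf_real P_def by (simp add: algebra_simps)
  have Qm: "Qm ?k ?m d = of_real Q"
    unfolding Qm_def EE ik Gd_real Q_def by (simp add: algebra_simps)
  show "F t = of_real ((E * (B\<^sup>2 + m\<^sup>2) * (sin (2 * m * d) / m) / (2 * B)) * exp (B * (t + d))
                                          + (- E * Ev * Od / B) * exp (- B * (t + d)))" if "t \<le> -d" for t
  proof -
    have "F t = of_real (P * cosh (B * (t + d)) + Q * (sinh (B * (t + d)) / B))"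
      unfolding F_def Fp_L[OF that] Gf_imag[OF B[THEN less_imp_neq, symmetric]] Pm Qm by simp
    also have "P * cosh (B * (t + d)) + Q * (sinh (B * (t + d)) / B) =
       ((P + Q / B) / 2) * exp (B * (t + d)) + ((P - Q / B) / 2) * exp (- B * (t + d))"
      using cs_exp[of B P "B * (t + d)" Q] B by simp
    also have "(P + Q / B) / 2 = E * (B\<^sup>2 + m\<^sup>2) * (sin (2 * m * d) / m) / (2 * B)"
      unfolding P_def Q_def using B m by (simp add: field_simps power2_eq_square)
    also have "(P - Q / B) / 2 = - E * Ev * Od / B"
      unfolding P_def Q_def Ev_def Od_def c2 s2 c_def[symmetric] s_def[symmetric] using B m
      by (simp add: field_simps power2_eq_square)
    finally show ?thesis .
  qed
  have F0: "F 0 = of_real (E * Ev)"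
    using FM[of 0] d unfolding Ev_def by (simp add: algebra_simps)
  have Fd0: "Fpd ?k ?m d 0 = of_real (E * Od)"
    unfolding Fpd_0[OF d] EE ik Gd_real Od_def by (simp add: algebra_simps)
  show "2 * F 0 * Fpd ?k ?m d 0 = of_real (2 * E\<^sup>2 * Ev * Od)"
    unfolding F0 Fd0 by (simp add: power2_eq_square algebra_simps)
qed

lemma inner_core:
  fixes f :: "real \<Rightarrow> real"
  assumes B: "0 < B" and d: "0 < d" and ab: "a < b" and G: "1 \<le> \<Gamma>"
    and fR: "\<And>t. d \<le> t \<Longrightarrow> \<bar>f t\<bar> = exp (- B * t)"
    and fM: "\<And>t. -d \<le> t \<Longrightarrow> t \<le> d \<Longrightarrow> \<bar>f t\<bar> \<le> exp (- B * d) * \<Gamma>"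
    and inner: "\<not> (b \<le> -d \<or> d \<le> a \<or> (a \<le> -d \<and> d \<le> b))"
  shows "\<bar>f b\<bar> * \<bar>f (-a)\<bar> \<le> exp (- B * (b - a)) * \<Gamma>\<^sup>2"
proof -
  have GG: "\<Gamma> \<le> \<Gamma>\<^sup>2" using G by (simp add: power2_eq_square)
  consider "a \<le> -d" "b < d" | "-d < a" "d \<le> b" | "-d < a" "b < d" using inner by linarith
  then show ?thesis
  proof cases
    case 1
    have "\<bar>f b\<bar> * \<bar>f (-a)\<bar> \<le> (exp (- B * d) * \<Gamma>) * exp (B * a)"
      using fR[of "-a"] fM[of b] 1 inner by (intro mult_mono) auto
    also have "\<dots> = exp (B * (a - d)) * \<Gamma>" by (simp add: algebra_simps exp_add[symmetric])
    also have "\<dots> \<le> exp (- B * (b - a)) * \<Gamma>\<^sup>2"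
      using 1 B G GG mult_left_mono[of b d B] by (intro mult_mono) (auto simp: algebra_simps)
    finally show ?thesis .
  next
    case 2
    have "\<bar>f b\<bar> * \<bar>f (-a)\<bar> \<le> exp (- B * b) * (exp (- B * d) * \<Gamma>)"
      using fR[of b] fM[of "-a"] 2 inner by (intro mult_mono) auto
    also have "\<dots> = exp (- B * (b + d)) * \<Gamma>" by (simp add: algebra_simps exp_add[symmetric])
    also have "\<dots> \<le> exp (- B * (b - a)) * \<Gamma>\<^sup>2"
      using 2 B G GG mult_left_mono[of "-d" a B] by (intro mult_mono) (auto simp: algebra_simps)
    finally show ?thesis .
  next
    case 3
    have "\<bar>f b\<bar> * \<bar>f (-a)\<bar> \<le> (exp (- B * d) * \<Gamma>) * (exp (- B * d) * \<Gamma>)"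
      using fM[of b] fM[of "-a"] 3 inner ab by (intro mult_mono) auto
    also have "\<dots> = exp (- B * (2 * d)) * \<Gamma>\<^sup>2" by (simp add: algebra_simps exp_add[symmetric] power2_eq_square)
    also have "\<dots> \<le> exp (- B * (b - a)) * \<Gamma>\<^sup>2"
      using 3 B G mult_left_mono[of "b - a" "2 * d" B] by (intro mult_right_mono) (auto simp: algebra_simps)
    finally show ?thesis .
  qed
qed

lemma regb_bound:
  fixes B m d a b :: real
  assumes B: "0 < B" and m: "0 < m" and d: "0 < d" and ab: "a < b"
  defines "F \<equiv> Fp (\<i> * complex_of_real B) (complex_of_real m) d"
  defines "W \<equiv> 2 * F 0 * Fpd (\<i> * complex_of_real B) (complex_of_real m) d 0"
  defines "T \<equiv> (cos (m * d) + B * sin (m * d) / m) * (m * sin (m * d) - B * cos (m * d))"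
  assumes T: "T \<noteq> 0"
  shows "norm (F b) * norm (F (-a)) / norm W \<le> exp (- B * (b - a)) *
     ((1 + 2 * B * d)\<^sup>2 * exp (2 * B * d) / (2 * \<bar>T\<bar>) + (B\<^sup>2 + m\<^sup>2) * \<bar>sin (2 * m * d) / m\<bar> / (4 * B * \<bar>T\<bar>) + 1 / (2 * B))"
proof -
  define E where "E = exp (- B * d)"
  define Ev where "Ev = cos (m * d) + B * sin (m * d) / m"
  define Od where "Od = m * sin (m * d) - B * cos (m * d)"
  have TE: "T = Ev * Od" unfolding T_def Ev_def Od_def ..
  note P = regb_pieces[OF B m d, folded F_def E_def Ev_def Od_def, folded W_def]
  define f where "f t = Re (F t)" for t
  have Ff: "F t = of_real (f t)" for t
  proof -
    consider "d \<le> t" | "-d \<le> t \<and> t \<le> d" | "t \<le> -d" by linarith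
    then show ?thesis unfolding f_def using P(1,2,3) by cases (metis Re_complex_of_real)+
  qed
  have Epos: "0 < E" unfolding E_def by simp
  have nW: "norm W = 2 * E\<^sup>2 * \<bar>T\<bar>" unfolding P(4) TE norm_of_real using Epos by (simp add: abs_mult)
  have Tpos: "0 < \<bar>T\<bar>" using T by simp
  have wpos: "0 < norm W" unfolding nW using Epos Tpos by simp
  have EBd: "exp (B * d) * E = 1" unfolding E_def by (simp add: exp_add[symmetric])
  define \<rho> where "\<rho> = (B\<^sup>2 + m\<^sup>2) * \<bar>sin (2 * m * d) / m\<bar> / (4 * B * \<bar>T\<bar>)"
  define \<Gamma> where "\<Gamma> = 1 + 2 * B * d"
  have G1: "1 \<le> \<Gamma>" unfolding \<Gamma>_def using B d by simp
  have fR: "f t = exp (- B * t)" if "d \<le> t" for t using P(1)[OF that] unfolding Ff of_real_eq_iff .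
  have fM: "\<bar>f t\<bar> \<le> E * \<Gamma>" if "-d \<le> t" "t \<le> d" for t
  proof -
    have "f t = E * (cos (m * (t - d)) - B * (sin (m * (t - d)) / m))"
      using P(2)[OF that] unfolding Ff of_real_eq_iff .
    then have "\<bar>f t\<bar> = E * \<bar>cos (m * (t - d)) - B * (sin (m * (t - d)) / m)\<bar>"
      using Epos by (simp add: abs_mult)
    also have "\<dots> \<le> E * (1 + B * (2 * d))"
    proof (intro mult_left_mono)
      have "\<bar>cos (m * (t - d)) - B * (sin (m * (t - d)) / m)\<bar> \<le> \<bar>cos (m * (t - d))\<bar> + B * \<bar>sin (m * (t - d)) / m\<bar>"
        using B abs_triangle_ineq4[of "cos (m * (t - d))" "B * (sin (m * (t - d)) / m)"] by (simp add: abs_mult)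
      also have "\<dots> \<le> 1 + B * (2 * d)"
        using sin_div_le[OF m, of "t - d"] that B by (intro add_mono mult_left_mono) auto
      finally show "\<bar>cos (m * (t - d)) - B * (sin (m * (t - d)) / m)\<bar> \<le> 1 + B * (2 * d)" .
    qed (use Epos in auto)
    finally show ?thesis unfolding \<Gamma>_def by (simp add: mult_ac)
  qed
  have main: "\<bar>f b\<bar> * \<bar>f (-a)\<bar> \<le> exp (- B * (b - a)) * (\<Gamma>\<^sup>2 + norm W * (\<rho> + 1 / (2 * B)))"
  proof (cases "b \<le> -d \<or> d \<le> a \<or> (a \<le> -d \<and> d \<le> b)")
    case True
    have "\<bar>f b\<bar> * \<bar>f (-a)\<bar> \<le> exp (- B * (b - a)) * max 1 (norm W * (\<rho> + 1 / (2 * B)))"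
    proof (rule outer_core[OF B d ab fR, where \<alpha>="E * (B\<^sup>2 + m\<^sup>2) * (sin (2 * m * d) / m) / (2 * B)"
          and \<beta>="- E * Ev * Od / B"])
      show "f t = E * (B\<^sup>2 + m\<^sup>2) * (sin (2 * m * d) / m) / (2 * B) * exp (B * (t + d)) + - E * Ev * Od / B * exp (- B * (t + d))"
        if "t \<le> -d" for t using P(3)[OF that] unfolding Ff of_real_eq_iff by simp
      show "\<bar>E * (B\<^sup>2 + m\<^sup>2) * (sin (2 * m * d) / m) / (2 * B)\<bar> \<le> \<rho> * exp (B * d) * norm W"
      proof -
        have "\<rho> * exp (B * d) * norm W = (B\<^sup>2 + m\<^sup>2) * \<bar>sin (2 * m * d) / m\<bar> * E / (2 * B) * (exp (B * d) * E)"
          unfolding \<rho>_def nW using Tpos B m by (simp add: field_simps power2_eq_square)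
        also have "\<dots> = \<bar>E * (B\<^sup>2 + m\<^sup>2) * (sin (2 * m * d) / m) / (2 * B)\<bar>"
          unfolding EBd using Epos B by (simp add: abs_mult abs_divide)
        finally show ?thesis by simp
      qed
      show "\<bar>- E * Ev * Od / B\<bar> \<le> exp (B * d) * norm W / (2 * B)"
      proof -
        have "exp (B * d) * norm W / (2 * B) = (exp (B * d) * E) * E * \<bar>T\<bar> / B"
          unfolding nW using B by (simp add: field_simps power2_eq_square)
        also have "\<dots> = \<bar>- E * Ev * Od / B\<bar>" unfolding EBd TE using Epos B by (simp add: abs_mult abs_divide)
        finally show ?thesis by simp
      qed
      show "0 \<le> \<rho>" unfolding \<rho>_def using B by simp
    qed (use True in auto)
    also have "\<dots> \<le> exp (- B * (b - a)) * (\<Gamma>\<^sup>2 + norm W * (\<rho> + 1 / (2 * B)))"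
    proof (intro mult_left_mono)
      have "1 \<le> \<Gamma>\<^sup>2" using G1 by (simp add: one_le_power)
      moreover have "0 \<le> norm W * (\<rho> + 1 / (2 * B))" unfolding \<rho>_def using B by simp
      ultimately show "max 1 (norm W * (\<rho> + 1 / (2 * B))) \<le> \<Gamma>\<^sup>2 + norm W * (\<rho> + 1 / (2 * B))" by simp
    qed simp
    finally show ?thesis .
  next
    case False
    have "\<bar>f b\<bar> * \<bar>f (-a)\<bar> \<le> exp (- B * (b - a)) * \<Gamma>\<^sup>2"
      by (rule inner_core[OF B d ab G1 _ _ False]) (use fR fM in \<open>auto simp: E_def\<close>)
    also have "\<dots> \<le> exp (- B * (b - a)) * (\<Gamma>\<^sup>2 + norm W * (\<rho> + 1 / (2 * B)))"
      unfolding \<rho>_def using B by (intro mult_left_mono) auto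
    finally show ?thesis .
  qed
  have "norm (F b) * norm (F (-a)) / norm W = \<bar>f b\<bar> * \<bar>f (-a)\<bar> / norm W" unfolding Ff by simp
  also have "\<dots> \<le> exp (- B * (b - a)) * (\<Gamma>\<^sup>2 + norm W * (\<rho> + 1 / (2 * B))) / norm W"
    using main wpos by (intro divide_right_mono) auto
  also have "\<dots> = exp (- B * (b - a)) * (\<Gamma>\<^sup>2 / norm W + (\<rho> + 1 / (2 * B)))"
    using wpos by (simp add: field_simps)
  also have "\<Gamma>\<^sup>2 / norm W = \<Gamma>\<^sup>2 * exp (2 * B * d) / (2 * \<bar>T\<bar>)"
  proof -
    have "E\<^sup>2 * exp (2 * B * d) = 1" unfolding E_def by (simp add: power2_eq_square exp_add[symmetric])
    then show ?thesis unfolding nW using Tpos Epos by (simp add: field_simps)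
  qed
  finally show ?thesis unfolding \<rho>_def \<Gamma>_def by (simp add: add.assoc)
qed


lemma sinh_le_xexp: "0 \<le> (x::real) \<Longrightarrow> sinh x \<le> x * exp x"
proof -
  assume x: "0 \<le> x"
  have "1 + (- 2 * x) \<le> exp (- 2 * x)" by (rule exp_ge_add_one_self)
  then have "exp x * (1 - 2 * x) \<le> exp x * exp (- 2 * x)" by (intro mult_left_mono) auto
  also have "exp x * exp (- 2 * x) = exp (- x)" by (simp add: exp_add[symmetric])
  finally have "exp x - exp (- x) \<le> 2 * x * exp x" by (simp add: algebra_simps)
  then show ?thesis unfolding sinh_exp by simp
qed

lemma sinh_le_exp: "0 \<le> (x::real) \<Longrightarrow> sinh x \<le> exp x / 2"
  unfolding sinh_exp by simp

lemma cosh_le_exp: "0 \<le> (x::real) \<Longrightarrow> cosh x \<le> exp x"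
proof -
  assume "0 \<le> x"
  then have "exp (- x) \<le> exp x" by simp
  then show ?thesis unfolding cosh_exp by simp
qed

lemma cosh_ge_exp: "exp (x::real) / 2 \<le> cosh x"
  unfolding cosh_exp by simp

lemma my_cosh_plus_sinh: "cosh (x::real) + sinh x = exp x"
  unfolding cosh_exp sinh_exp by (simp add: field_simps)

lemma rega_pieces:
  fixes A B d :: real
  assumes A: "0 < A" and B: "0 < B" and d: "0 < d"
  defines "F \<equiv> Fp (\<i> * complex_of_real B) (\<i> * complex_of_real A) d"
  defines "E \<equiv> exp (- B * d)"
  defines "Ev \<equiv> cosh (A * d) + B * sinh (A * d) / A"
  defines "Od \<equiv> - (A * sinh (A * d) + B * cosh (A * d))"
  shows "\<And>t. d \<le> t \<Longrightarrow> F t = of_real (exp (- B * t))"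
    and "\<And>t. -d \<le> t \<Longrightarrow> t \<le> d \<Longrightarrow> F t = of_real (E * (cosh (A * (d - t)) + B * (sinh (A * (d - t)) / A)))"
    and "\<And>t. t \<le> -d \<Longrightarrow> F t = of_real ((E * (B\<^sup>2 - A\<^sup>2) * (sinh (2 * A * d) / A) / (2 * B)) * exp (B * (t + d))
                                          + (- E * Ev * Od / B) * exp (- B * (t + d)))"
    and "2 * F 0 * Fpd (\<i> * complex_of_real B) (\<i> * complex_of_real A) d 0 = of_real (2 * E\<^sup>2 * Ev * Od)"
proof -
  let ?k = "\<i> * complex_of_real B" and ?m = "\<i> * complex_of_real A"
  have knz: "?k \<noteq> 0" using B by simp
  have EE: "Ee ?k d = of_real E" unfolding E_def by (rule Ee_imag)
  have ik: "\<i> * ?k * of_real E = of_real (- B * E)" by simp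
  have An: "A \<noteq> 0" using A by simp
  show "F t = of_real (exp (- B * t))" if "d \<le> t" for t
    unfolding F_def using Fp_R[OF d knz that] exp_imag by simp
  show FM: "F t = of_real (E * (cosh (A * (d - t)) + B * (sinh (A * (d - t)) / A)))" if "-d \<le> t" "t \<le> d" for t
  proof -
    have e1: "cosh (A * (t - d)) = cosh (A * (d - t))" by (metis cosh_minus minus_diff_eq mult_minus_right)
    have e2: "sinh (A * (t - d)) = - sinh (A * (d - t))" by (metis sinh_minus minus_diff_eq mult_minus_right)
    show ?thesis unfolding F_def Fp_M[OF d that] EE ik Gf_imag[OF An] e1 e2 by (simp add: algebra_simps)
  qed
  define ch where "ch = cosh (A * d)"
  define sh where "sh = sinh (A * d)"
  have c2: "cosh (2 * A * d) = ch\<^sup>2 + sh\<^sup>2" unfolding ch_def sh_def using cosh_double[of "A * d"] by (simp add: mult.assoc)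
  have s2: "sinh (2 * A * d) = 2 * sh * ch" unfolding ch_def sh_def using sinh_double[of "A * d"] by (simp add: mult.assoc)
  define P where "P = E * (cosh (2 * A * d) + B * (sinh (2 * A * d) / A))"
  define Q where "Q = - E * (B * cosh (2 * A * d) + A * sinh (2 * A * d))"
  have Pm: "Pm ?k ?m d = of_real P"
  proof -
    have "Pm ?k ?m d = Fp ?k ?m d (-d)" by (rule Pm_Fp[OF d])
    also have "\<dots> = of_real P"
    proof -
      have e: "A * (d - - d) = 2 * A * d" by simp
      show ?thesis using FM[of "-d"] d unfolding F_def P_def e by simp
    qed
    finally show ?thesis .
  qed
  have Qm: "Qm ?k ?m d = of_real Q"
  proof -
    have e0: "A * (- d - d) = - (2 * A * d)" by (simp add: algebra_simps)
    have e1: "cosh (A * (- d - d)) = cosh (2 * A * d)" by (simp only: e0 cosh_minus)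
    have e2: "sinh (A * (- d - d)) = - sinh (2 * A * d)" by (simp only: e0 sinh_minus)
    show ?thesis unfolding Qm_def EE ik Gd_imag Q_def e1 e2 by (simp add: algebra_simps)
  qed
  show "F t = of_real ((E * (B\<^sup>2 - A\<^sup>2) * (sinh (2 * A * d) / A) / (2 * B)) * exp (B * (t + d))
                                          + (- E * Ev * Od / B) * exp (- B * (t + d)))" if "t \<le> -d" for t
  proof -
    have "F t = of_real (P * cosh (B * (t + d)) + Q * (sinh (B * (t + d)) / B))"
      unfolding F_def Fp_L[OF that] Gf_imag[OF B[THEN less_imp_neq, symmetric]] Pm Qm by simp
    also have "P * cosh (B * (t + d)) + Q * (sinh (B * (t + d)) / B) =
       ((P + Q / B) / 2) * exp (B * (t + d)) + ((P - Q / B) / 2) * exp (- B * (t + d))"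
      using cs_exp[of B P "B * (t + d)" Q] B by simp
    also have "(P + Q / B) / 2 = E * (B\<^sup>2 - A\<^sup>2) * (sinh (2 * A * d) / A) / (2 * B)"
      unfolding P_def Q_def using B A by (simp add: field_simps power2_eq_square)
    also have "(P - Q / B) / 2 = - E * Ev * Od / B"
      unfolding P_def Q_def Ev_def Od_def c2 s2 ch_def[symmetric] sh_def[symmetric] using B A
      by (simp add: field_simps power2_eq_square)
    finally show ?thesis .
  qed
  have F0: "F 0 = of_real (E * Ev)"
    using FM[of 0] d unfolding Ev_def by (simp add: algebra_simps)
  have Fd0: "Fpd ?k ?m d 0 = of_real (E * Od)"
  proof -
    have e2: "sinh (A * (0 - d)) = - sinh (A * d)" by simp
    show ?thesis unfolding Fpd_0[OF d] EE ik Gd_imag Od_def e2 by (simp add: algebra_simps)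
  qed
  show "2 * F 0 * Fpd ?k ?m d 0 = of_real (2 * E\<^sup>2 * Ev * Od)"
    unfolding F0 Fd0 by (simp add: power2_eq_square algebra_simps)
qed

lemma inner_core_a:
  fixes f :: "real \<Rightarrow> real"
  assumes A: "0 < A" and AB: "A \<le> B" and d: "0 < d" and ab: "a < b" and G: "1 \<le> \<Gamma>"
    and fR: "\<And>t. d \<le> t \<Longrightarrow> \<bar>f t\<bar> = exp (- B * t)"
    and fM: "\<And>t. -d \<le> t \<Longrightarrow> t \<le> d \<Longrightarrow> \<bar>f t\<bar> \<le> exp (- B * d) * \<Gamma> * exp (A * (d - t))"
    and inner: "\<not> (b \<le> -d \<or> d \<le> a \<or> (a \<le> -d \<and> d \<le> b))"
  shows "\<bar>f b\<bar> * \<bar>f (-a)\<bar> \<le> exp (- B * d) ^ 2 * exp (2 * A * d) * \<Gamma>\<^sup>2 * exp (- A * (b - a))"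
proof -
  have GG: "\<Gamma> \<le> \<Gamma>\<^sup>2" using G by (simp add: power2_eq_square)
  have ee: "exp (- B * d) ^ 2 = exp (- 2 * B * d)" by (simp add: power2_eq_square exp_add[symmetric])
  consider "a \<le> -d" "b < d" | "-d < a" "d \<le> b" | "-d < a" "b < d" using inner by linarith
  then show ?thesis
  proof cases
    case 1
    have "\<bar>f b\<bar> * \<bar>f (-a)\<bar> \<le> (exp (- B * d) * \<Gamma> * exp (A * (d - b))) * exp (B * a)"
      using fR[of "-a"] fM[of b] 1 inner by (intro mult_mono) auto
    also have "\<dots> = \<Gamma> * exp (- B * d + A * (d - b) + B * a)" by (simp add: algebra_simps exp_add[symmetric])
    also have "\<dots> \<le> \<Gamma>\<^sup>2 * exp (- 2 * B * d + 2 * A * d - A * (b - a))"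
    proof (intro mult_mono GG)
      have "(B - A) * (a + d) \<le> 0" using 1 AB by (intro mult_nonneg_nonpos) auto
      then show "exp (- B * d + A * (d - b) + B * a) \<le> exp (- 2 * B * d + 2 * A * d - A * (b - a))"
        by (simp add: algebra_simps)
    qed (use G in auto)
    finally show ?thesis unfolding ee by (simp add: algebra_simps exp_add[symmetric] exp_diff)
  next
    case 2
    have "\<bar>f b\<bar> * \<bar>f (-a)\<bar> \<le> exp (- B * b) * (exp (- B * d) * \<Gamma> * exp (A * (d + a)))"
      using fR[of b] fM[of "-a"] 2 inner by (intro mult_mono) auto
    also have "\<dots> = \<Gamma> * exp (- B * b - B * d + A * (d + a))" by (simp add: algebra_simps exp_add[symmetric])
    also have "\<dots> \<le> \<Gamma>\<^sup>2 * exp (- 2 * B * d + 2 * A * d - A * (b - a))"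
    proof (intro mult_mono GG)
      have "(B - A) * (b - d) \<ge> 0" using 2 AB by (intro mult_nonneg_nonneg) auto
      then show "exp (- B * b - B * d + A * (d + a)) \<le> exp (- 2 * B * d + 2 * A * d - A * (b - a))"
        by (simp add: algebra_simps)
    qed (use G in auto)
    finally show ?thesis unfolding ee by (simp add: algebra_simps exp_add[symmetric] exp_diff)
  next
    case 3
    have "\<bar>f b\<bar> * \<bar>f (-a)\<bar> \<le> (exp (- B * d) * \<Gamma> * exp (A * (d - b))) * (exp (- B * d) * \<Gamma> * exp (A * (d + a)))"
      using fM[of b] fM[of "-a"] 3 inner ab by (intro mult_mono) auto
    also have "\<dots> = \<Gamma>\<^sup>2 * exp (- 2 * B * d + 2 * A * d - A * (b - a))"
      by (simp add: algebra_simps exp_add[symmetric] power2_eq_square)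
    finally show ?thesis unfolding ee by (simp add: algebra_simps exp_add[symmetric] exp_diff)
  qed
qed

lemma rega_bound:
  fixes A B K d a b :: real
  assumes A: "0 < A" and AB: "A < B" and K: "0 < K" and BK: "B\<^sup>2 - A\<^sup>2 = K\<^sup>2" and d: "0 < d" and ab: "a < b"
  defines "F \<equiv> Fp (\<i> * complex_of_real B) (\<i> * complex_of_real A) d"
  defines "W \<equiv> 2 * F 0 * Fpd (\<i> * complex_of_real B) (\<i> * complex_of_real A) d 0"
  defines "Cst \<equiv> max (exp (2 * K * d) + 1) ((2 + 4 * K * d)\<^sup>2)"
  shows "norm (F b) * norm (F (-a)) / norm W \<le> Cst / B * exp (- A * (b - a))"
    and "b \<le> -d \<or> d \<le> a \<or> (a \<le> -d \<and> d \<le> b) \<Longrightarrow> norm (F b) * norm (F (-a)) / norm W \<le> Cst / B * exp (- B * (b - a))"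
proof -
  have B: "0 < B" using A AB by simp
  define E where "E = exp (- B * d)"
  define ch where "ch = cosh (A * d)"
  define sh where "sh = sinh (A * d)"
  define Ev where "Ev = cosh (A * d) + B * sinh (A * d) / A"
  define Od where "Od = - (A * sinh (A * d) + B * cosh (A * d))"
  note P = rega_pieces[OF A B d, folded F_def E_def Ev_def Od_def, folded W_def]
  define f where "f t = Re (F t)" for t
  have Ff: "F t = of_real (f t)" for t
  proof -
    consider "d \<le> t" | "-d \<le> t \<and> t \<le> d" | "t \<le> -d" by linarith
    then show ?thesis unfolding f_def using P(1,2,3) by cases (metis Re_complex_of_real)+
  qed
  have Epos: "0 < E" unfolding E_def by simp
  have shpos: "0 < sh" unfolding sh_def using A d by simp
  have chpos: "0 < ch" unfolding ch_def by simp
  have Ev_ge: "exp (A * d) \<le> Ev"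
  proof -
    have "sh \<le> B * sh / A" using shpos A AB by (simp add: field_simps)
    then show ?thesis unfolding Ev_def ch_def[symmetric] sh_def[symmetric] using my_cosh_plus_sinh[of "A * d"]
      unfolding ch_def sh_def by simp
  qed
  have Ev_ge2: "B * sh / A \<le> Ev" unfolding Ev_def sh_def[symmetric] using chpos ch_def by simp
  have Evpos: "0 < Ev" using Ev_ge by (smt (verit) exp_gt_zero)
  have Od_abs: "\<bar>Od\<bar> = A * sh + B * ch" unfolding Od_def sh_def[symmetric] ch_def[symmetric] using mult_pos_pos[OF A shpos] mult_pos_pos[OF B chpos] by simp
  have Od_ge: "B * exp (A * d) / 2 \<le> \<bar>Od\<bar>"
  proof -
    have "B * (exp (A * d) / 2) \<le> B * ch" unfolding ch_def using B cosh_ge_exp by (intro mult_left_mono) auto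
    then show ?thesis unfolding Od_abs using mult_pos_pos[OF A shpos] by simp
  qed
  have Od_ge2: "B * ch \<le> \<bar>Od\<bar>" unfolding Od_abs using mult_pos_pos[OF A shpos] by simp
  have Odpos: "0 < \<bar>Od\<bar>" using Od_ge2 B chpos by (smt (verit) mult_pos_pos)
  have nW: "norm W = 2 * E\<^sup>2 * Ev * \<bar>Od\<bar>" unfolding P(4) norm_of_real using Epos Evpos by (simp add: abs_mult)
  have BmA: "B - A \<le> K"
  proof -
    have "K \<le> B" using BK A by (smt (verit) power2_le_imp_le zero_le_power2 less_imp_le B)
    have "(B - A) * K \<le> (B - A) * (B + A)" using \<open>K \<le> B\<close> A AB by (intro mult_left_mono) auto
    also have "\<dots> = K * K" using BK by (simp add: power2_eq_square algebra_simps)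
    finally show ?thesis using K by simp
  qed
  have wlow: "B * E\<^sup>2 * exp (2 * A * d) \<le> norm W"
  proof -
    have "B * E\<^sup>2 * exp (2 * A * d) = 2 * E\<^sup>2 * exp (A * d) * (B * exp (A * d) / 2)"
      by (simp add: exp_add[symmetric] algebra_simps)
    also have "\<dots> \<le> 2 * E\<^sup>2 * Ev * \<bar>Od\<bar>"
      using Ev_ge Od_ge Epos B Evpos by (intro mult_mono) auto
    finally show ?thesis unfolding nW .
  qed
  have wpos: "0 < norm W" using wlow B Epos by (smt (verit) exp_gt_zero mult_pos_pos zero_less_power)
  have inv_w: "1 / norm W \<le> exp (2 * K * d) / B"
  proof -
    have "E\<^sup>2 * exp (2 * A * d) = exp (- (2 * (B - A) * d))" unfolding E_def
      by (simp add: power2_eq_square exp_add[symmetric] algebra_simps)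
    also have "\<dots> \<ge> exp (- (2 * K * d))" using BmA d by (simp add: mult_right_mono)
    finally have "B * exp (- (2 * K * d)) \<le> norm W" using wlow B
      by (smt (verit) mult_left_mono mult.assoc)
    then have "1 / norm W \<le> 1 / (B * exp (- (2 * K * d)))" using B wpos by (intro divide_left_mono) auto
    also have "\<dots> = exp (2 * K * d) / B" by (simp add: exp_minus field_simps)
    finally show ?thesis .
  qed
  define \<rho> where "\<rho> = (B\<^sup>2 - A\<^sup>2) * \<bar>sinh (2 * A * d) / A\<bar> / (4 * B * \<bar>Ev * Od\<bar>)"
  have rho0: "0 \<le> \<rho>" unfolding \<rho>_def using AB A B by (simp add: power_strict_mono less_imp_le)
  have rho_le: "\<rho> \<le> 1 / (2 * B)"
  proof -
    have s2: "\<bar>sinh (2 * A * d) / A\<bar> = 2 * sh * ch / A"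
      using sinh_double[of "A * d"] shpos chpos A unfolding sh_def ch_def by (simp add: mult.assoc abs_mult)
    have EO: "B * sh / A * (B * ch) \<le> \<bar>Ev * Od\<bar>" unfolding abs_mult using Ev_ge2 Od_ge2 Evpos shpos chpos A B
      by (intro mult_mono) auto
    have pos: "0 < B * sh / A * (B * ch)" using shpos chpos A B by simp
    have EOpos: "0 < \<bar>Ev * Od\<bar>" using EO pos by linarith
    have "\<rho> \<le> (B\<^sup>2 - A\<^sup>2) * (2 * sh * ch / A) / (4 * B * (B * sh / A * (B * ch)))"
      unfolding \<rho>_def s2 using EO pos AB A B shpos chpos EOpos
      by (intro divide_left_mono mult_left_mono) (auto simp: power_strict_mono less_imp_le)
    also have "\<dots> = (B\<^sup>2 - A\<^sup>2) / (2 * B^3)" using shpos chpos A B by (simp add: field_simps power2_eq_square power3_eq_cube)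
    also have "\<dots> \<le> B\<^sup>2 / (2 * B^3)" using A B by (intro divide_right_mono) auto
    also have "\<dots> = 1 / (2 * B)" using B by (simp add: field_simps power2_eq_square power3_eq_cube)
    finally show ?thesis .
  qed
  define \<Gamma> where "\<Gamma> = 2 + 4 * K * d"
  have G1: "1 \<le> \<Gamma>" unfolding \<Gamma>_def using K d by simp
  have fR: "f t = exp (- B * t)" if "d \<le> t" for t using P(1)[OF that] unfolding Ff of_real_eq_iff .
  have fM: "\<bar>f t\<bar> \<le> E * \<Gamma> * exp (A * (d - t))" if "-d \<le> t" "t \<le> d" for t
  proof -
    define \<tau> where "\<tau> = d - t"
    have tau: "0 \<le> \<tau>" "\<tau> \<le> 2 * d" unfolding \<tau>_def using that by auto
    have ft: "f t = E * (cosh (A * \<tau>) + B * (sinh (A * \<tau>) / A))"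
      using P(2)[OF that] unfolding Ff of_real_eq_iff \<tau>_def .
    have shn: "0 \<le> sinh (A * \<tau>)" using A tau by simp
    have c1: "cosh (A * \<tau>) \<le> exp (A * \<tau>)" using A tau by (intro cosh_le_exp) simp
    have c2: "B * (sinh (A * \<tau>) / A) \<le> (1 + 4 * K * d) * exp (A * \<tau>)"
    proof (cases "K \<le> A")
      case True
      have "K * K \<le> A * A" using True K by (intro mult_mono) auto
      moreover have "0 \<le> A * A" by simp
      moreover have "B * B - A * A = K * K" using BK by (simp add: power2_eq_square)
      ultimately have "B * B \<le> (2 * A) * (2 * A)" by linarith
      then have "B\<^sup>2 \<le> (2 * A)\<^sup>2" by (simp add: power2_eq_square)
      then have B2: "B \<le> 2 * A" by (rule power2_le_imp_le) (use A in simp)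
      have "B * (sinh (A * \<tau>) / A) \<le> (2 * A) * ((exp (A * \<tau>) / 2) / A)"
        using B2 sinh_le_exp[of "A * \<tau>"] A tau shn by (intro mult_mono divide_right_mono) auto
      also have "\<dots> = exp (A * \<tau>)" using A by simp
      also have "\<dots> \<le> (1 + 4 * K * d) * exp (A * \<tau>)" using K d by simp
      finally show ?thesis .
    next
      case False
      have "A * A \<le> K * K" using False A by (intro mult_mono) auto
      moreover have "0 \<le> K * K" by simp
      moreover have "B * B - A * A = K * K" using BK by (simp add: power2_eq_square)
      ultimately have "B * B \<le> (2 * K) * (2 * K)" by linarith
      then have "B\<^sup>2 \<le> (2 * K)\<^sup>2" by (simp add: power2_eq_square)
      then have B2: "B \<le> 2 * K" by (rule power2_le_imp_le) (use K in simp)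
      have "sinh (A * \<tau>) / A \<le> \<tau> * exp (A * \<tau>)"
        using sinh_le_xexp[of "A * \<tau>"] A tau by (simp add: divide_le_eq mult_ac)
      then have "B * (sinh (A * \<tau>) / A) \<le> (2 * K) * ((2 * d) * exp (A * \<tau>))"
        using B2 tau B shn A by (intro mult_mono) (auto intro: order_trans[OF _ mult_right_mono[of \<tau> "2*d"]])
      also have "\<dots> \<le> (1 + 4 * K * d) * exp (A * \<tau>)" by (simp add: algebra_simps)
      finally show ?thesis .
    qed
    have "\<bar>f t\<bar> = E * (cosh (A * \<tau>) + B * (sinh (A * \<tau>) / A))"
      unfolding ft using Epos shn A B by (simp add: abs_mult)
    also have "\<dots> \<le> E * (\<Gamma> * exp (A * \<tau>))" unfolding \<Gamma>_def using c1 c2 Epos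
      by (intro mult_left_mono) (auto simp: algebra_simps)
    finally show ?thesis unfolding \<tau>_def by (simp add: mult.assoc)
  qed
  have Cst1: "exp (2 * K * d) + 1 \<le> Cst" and Cst2: "\<Gamma>\<^sup>2 \<le> Cst" unfolding Cst_def \<Gamma>_def by auto
  have outer_b: "norm (F b) * norm (F (-a)) / norm W \<le> Cst / B * exp (- B * (b - a))"
    if outer: "b \<le> -d \<or> d \<le> a \<or> (a \<le> -d \<and> d \<le> b)"
  proof -
    have "\<bar>f b\<bar> * \<bar>f (-a)\<bar> \<le> exp (- B * (b - a)) * max 1 (norm W * (\<rho> + 1 / (2 * B)))"
    proof (rule outer_core[OF B d ab fR, where \<alpha>="E * (B\<^sup>2 - A\<^sup>2) * (sinh (2 * A * d) / A) / (2 * B)"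
          and \<beta>="- E * Ev * Od / B"])
      show "f t = E * (B\<^sup>2 - A\<^sup>2) * (sinh (2 * A * d) / A) / (2 * B) * exp (B * (t + d)) + - E * Ev * Od / B * exp (- B * (t + d))"
        if "t \<le> -d" for t using P(3)[OF that] unfolding Ff of_real_eq_iff by simp
      have EBd: "exp (B * d) * E = 1" unfolding E_def by (simp add: exp_add[symmetric])
      show "\<bar>E * (B\<^sup>2 - A\<^sup>2) * (sinh (2 * A * d) / A) / (2 * B)\<bar> \<le> \<rho> * exp (B * d) * norm W"
      proof -
        have "\<rho> * exp (B * d) * norm W = (B\<^sup>2 - A\<^sup>2) * \<bar>sinh (2 * A * d) / A\<bar> * E / (2 * B) * (exp (B * d) * E)"
          unfolding \<rho>_def nW using Evpos B A Epos Odpos by (simp add: field_simps power2_eq_square abs_mult)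
        also have "\<dots> = \<bar>E * (B\<^sup>2 - A\<^sup>2) * (sinh (2 * A * d) / A) / (2 * B)\<bar>"
          unfolding EBd using Epos B AB A by (simp add: abs_mult abs_divide power_strict_mono less_imp_le)
        finally show ?thesis by simp
      qed
      show "\<bar>- E * Ev * Od / B\<bar> \<le> exp (B * d) * norm W / (2 * B)"
      proof -
        have "exp (B * d) * norm W / (2 * B) = (exp (B * d) * E) * E * Ev * \<bar>Od\<bar> / B"
          unfolding nW using B by (simp add: field_simps power2_eq_square)
        also have "\<dots> = \<bar>- E * Ev * Od / B\<bar>" unfolding EBd using Epos B Evpos by (simp add: abs_mult abs_divide)
        finally show ?thesis by simp
      qed
    qed (use rho0 outer in auto)
    then have "norm (F b) * norm (F (-a)) / norm W \<le> exp (- B * (b - a)) * max 1 (norm W * (\<rho> + 1 / (2 * B))) / norm W"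
      unfolding Ff norm_of_real using wpos by (intro divide_right_mono) auto
    also have "\<dots> \<le> exp (- B * (b - a)) * (1 / norm W + (\<rho> + 1 / (2 * B)))"
    proof -
      have "max 1 (norm W * (\<rho> + 1 / (2 * B))) / norm W \<le> 1 / norm W + (\<rho> + 1 / (2 * B))"
        using wpos rho0 B by (auto simp: field_simps max_def)
      then have "exp (- B * (b - a)) * (max 1 (norm W * (\<rho> + 1 / (2 * B))) / norm W) \<le> exp (- B * (b - a)) * (1 / norm W + (\<rho> + 1 / (2 * B)))"
        by (intro mult_left_mono) auto
      then show ?thesis by simp
    qed
    also have "\<dots> \<le> exp (- B * (b - a)) * (exp (2 * K * d) / B + (1 / (2 * B) + 1 / (2 * B)))"
      using inv_w rho_le by (intro mult_left_mono add_mono) auto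
    also have "\<dots> = exp (- B * (b - a)) * ((exp (2 * K * d) + 1) / B)" by (simp add: add_divide_distrib)
    also have "\<dots> \<le> exp (- B * (b - a)) * (Cst / B)" using Cst1 B by (intro mult_left_mono divide_right_mono) auto
    finally show ?thesis by (simp add: mult_ac)
  qed
  then show "b \<le> -d \<or> d \<le> a \<or> (a \<le> -d \<and> d \<le> b) \<Longrightarrow> norm (F b) * norm (F (-a)) / norm W \<le> Cst / B * exp (- B * (b - a))" .
  show "norm (F b) * norm (F (-a)) / norm W \<le> Cst / B * exp (- A * (b - a))"
  proof (cases "b \<le> -d \<or> d \<le> a \<or> (a \<le> -d \<and> d \<le> b)")
    case True
    have "exp (- B * (b - a)) \<le> exp (- A * (b - a))" using AB ab by (simp add: mult_right_mono)
    then have "Cst / B * exp (- B * (b - a)) \<le> Cst / B * exp (- A * (b - a))"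
    proof (intro mult_left_mono)
      have "0 < Cst" using Cst1 exp_gt_zero[of "2 * K * d"] by linarith
      then show "0 \<le> Cst / B" using B by simp
    qed
    then show ?thesis using outer_b[OF True] by linarith
  next
    case False
    have "\<bar>f b\<bar> * \<bar>f (-a)\<bar> \<le> exp (- B * d) ^ 2 * exp (2 * A * d) * \<Gamma>\<^sup>2 * exp (- A * (b - a))"
      by (rule inner_core_a[OF A _ d ab G1 _ _ False]) (use AB fR fM in \<open>auto simp: E_def\<close>)
    then have "norm (F b) * norm (F (-a)) / norm W \<le> (E\<^sup>2 * exp (2 * A * d)) * (\<Gamma>\<^sup>2 * exp (- A * (b - a))) / norm W"
      unfolding Ff norm_of_real E_def using wpos by (intro divide_right_mono) (auto simp: mult_ac)
    also have "\<dots> \<le> (E\<^sup>2 * exp (2 * A * d)) * (\<Gamma>\<^sup>2 * exp (- A * (b - a))) / (B * E\<^sup>2 * exp (2 * A * d))"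
      using wlow B Epos wpos by (intro divide_left_mono) auto
    also have "\<dots> = \<Gamma>\<^sup>2 / B * exp (- A * (b - a))" using Epos B by (simp add: field_simps)
    also have "\<dots> \<le> Cst / B * exp (- A * (b - a))" using Cst2 B by (intro mult_right_mono divide_right_mono) auto
    finally show ?thesis .
  qed
qed


lemma deriv_local_lower:
  fixes T :: "real \<Rightarrow> real"
  assumes "(T has_real_derivative D) (at z)" "D \<noteq> 0" "T z = 0"
  shows "\<exists>e>0. \<exists>c>0. \<forall>x. \<bar>x - z\<bar> < e \<longrightarrow> c * \<bar>x - z\<bar> \<le> \<bar>T x\<bar>"
proof -
  have "((\<lambda>y. (T y - T z) / (y - z)) \<longlongrightarrow> D) (at z)"
    using assms(1) has_field_derivative_iff by blast
  then have "eventually (\<lambda>y. dist ((T y - T z) / (y - z)) D < \<bar>D\<bar> / 2) (at z)"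
    using assms(2) by (intro tendstoD) auto
  then obtain e where e: "e > 0" and he: "\<And>y. y \<noteq> z \<Longrightarrow> dist y z < e \<Longrightarrow> dist ((T y - T z) / (y - z)) D < \<bar>D\<bar> / 2"
    unfolding eventually_at by auto
  show ?thesis
  proof (intro exI conjI allI impI)
    show "e > 0" by fact
    show "\<bar>D\<bar> / 2 > 0" using assms(2) by simp
    fix x assume x: "\<bar>x - z\<bar> < e"
    show "\<bar>D\<bar> / 2 * \<bar>x - z\<bar> \<le> \<bar>T x\<bar>"
    proof (cases "x = z")
      case True then show ?thesis by simp
    next
      case False
      have "\<bar>T x / (x - z) - D\<bar> < \<bar>D\<bar> / 2" using he[OF False] x assms(3) by (simp add: dist_real_def)
      then have "\<bar>D\<bar> / 2 \<le> \<bar>T x / (x - z)\<bar>" by linarith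
      then have "\<bar>D\<bar> / 2 * \<bar>x - z\<bar> \<le> \<bar>T x / (x - z)\<bar> * \<bar>x - z\<bar>" by (intro mult_right_mono) auto
      also have "\<dots> = \<bar>T x\<bar>" using False by (simp add: abs_divide)
      finally show ?thesis .
    qed
  qed
qed

lemma simple_zeros_bound:
  fixes T :: "real \<Rightarrow> real"
  assumes ab: "a \<le> b" and cT: "continuous_on {a..b} T"
    and dT: "\<And>z. z \<in> {a..b} \<Longrightarrow> T z = 0 \<Longrightarrow> \<exists>D. D \<noteq> 0 \<and> (T has_real_derivative D) (at z)"
  shows "finite {z\<in>{a..b}. T z = 0} \<and> (\<exists>c>0. \<forall>x\<in>{a..b}. c * (\<Prod>z\<in>{z\<in>{a..b}. T z = 0}. \<bar>x - z\<bar>) \<le> \<bar>T x\<bar>)"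
proof -
  define Z where "Z = {z\<in>{a..b}. T z = 0}"
  have loc: "\<forall>z\<in>Z. \<exists>e>0. \<exists>c>0. \<forall>x. \<bar>x - z\<bar> < e \<longrightarrow> c * \<bar>x - z\<bar> \<le> \<bar>T x\<bar>"
  proof
    fix z assume "z \<in> Z"
    then obtain D where "D \<noteq> 0" "(T has_real_derivative D) (at z)" "T z = 0" using dT unfolding Z_def by blast
    then show "\<exists>e>0. \<exists>c>0. \<forall>x. \<bar>x - z\<bar> < e \<longrightarrow> c * \<bar>x - z\<bar> \<le> \<bar>T x\<bar>" using deriv_local_lower by blast
  qed
  then obtain e c where ec: "\<And>z. z \<in> Z \<Longrightarrow> e z > 0 \<and> c z > 0 \<and> (\<forall>x. \<bar>x - z\<bar> < e z \<longrightarrow> c z * \<bar>x - z\<bar> \<le> \<bar>T x\<bar>)"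
    by metis
  have Zcl: "closed Z"
  proof -
    have "closed ({a..b} \<inter> T -` {0})" by (rule continuous_closed_preimage[OF cT]) auto
    moreover have "Z = {a..b} \<inter> T -` {0}" unfolding Z_def by auto
    ultimately show ?thesis by simp
  qed
  have finZ: "finite Z"
  proof (rule ccontr)
    assume inf: "infinite Z"
    have "Z \<subseteq> {a..b}" unfolding Z_def by auto
    then obtain x where "x \<in> {a..b}" "x islimpt Z"
      using Heine_Borel_imp_Bolzano_Weierstrass[OF compact_Icc inf] by blast
    then have xZ: "x \<in> Z" using Zcl closed_limpt by blast
    then have "e x > 0" using ec by blast
    then obtain y where y: "y \<in> Z" "y \<noteq> x" "dist y x < e x"
      using \<open>x islimpt Z\<close> unfolding islimpt_approachable by blast
    have "c x * \<bar>y - x\<bar> \<le> \<bar>T y\<bar>" using ec[OF xZ] y by (simp add: dist_real_def)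
    moreover have "T y = 0" using y unfolding Z_def by auto
    moreover have "c x * \<bar>y - x\<bar> > 0" using ec[OF xZ] y by simp
    ultimately show False by simp
  qed
  define U where "U = (\<Union>z\<in>Z. ball z (e z))"
  define S0 where "S0 = {a..b} - U"
  have S0c: "compact S0" unfolding S0_def U_def
    by (intro compact_diff compact_Icc open_UN) auto
  have S0pos: "\<forall>x\<in>S0. T x \<noteq> 0"
  proof
    fix x assume x: "x \<in> S0"
    show "T x \<noteq> 0"
    proof
      assume "T x = 0"
      then have "x \<in> Z" using x unfolding S0_def Z_def by auto
      then have "x \<in> U" unfolding U_def using ec by force
      then show False using x unfolding S0_def by auto
    qed
  qed
  obtain m0 where m0: "m0 > 0" "\<And>x. x \<in> S0 \<Longrightarrow> m0 \<le> \<bar>T x\<bar>"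
  proof (cases "S0 = {}")
    case True then show ?thesis using that[of 1] by auto
  next
    case False
    have "continuous_on S0 (\<lambda>x. \<bar>T x\<bar>)"
      by (intro continuous_intros continuous_on_subset[OF cT]) (auto simp: S0_def)
    then obtain x0 where "x0 \<in> S0" "\<And>y. y \<in> S0 \<Longrightarrow> \<bar>T x0\<bar> \<le> \<bar>T y\<bar>"
      using continuous_attains_inf[OF S0c False] by blast
    then show ?thesis using that[of "\<bar>T x0\<bar>"] S0pos by auto
  qed
  define cm where "cm = Min (insert m0 (c ` Z))"
  have cm_pos: "cm > 0" unfolding cm_def using finZ m0 ec by (subst Min_gr_iff) auto
  have cm_le: "cm \<le> m0" "\<And>z. z \<in> Z \<Longrightarrow> cm \<le> c z" unfolding cm_def using finZ by auto
  define M where "M = (max 1 (b - a)) ^ card Z"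
  have M1: "1 \<le> M" unfolding M_def by simp
  have fact1: "(\<Prod>z\<in>Z'. \<bar>x - z\<bar>) \<le> (max 1 (b - a)) ^ card Z'" if "Z' \<subseteq> Z" "x \<in> {a..b}" for Z' x
  proof -
    have "finite Z'" using finZ that(1) finite_subset by blast
    have "(\<Prod>z\<in>Z'. \<bar>x - z\<bar>) \<le> (\<Prod>z\<in>Z'. max 1 (b - a))"
    proof (rule prod_mono)
      fix z assume "z \<in> Z'"
      then have "z \<in> {a..b}" using that(1) unfolding Z_def by auto
      then show "0 \<le> \<bar>x - z\<bar> \<and> \<bar>x - z\<bar> \<le> max 1 (b - a)" using that(2) by auto
    qed
    then show ?thesis by simp
  qed
  have Mle: "(max 1 (b - a)) ^ card Z' \<le> M" if "Z' \<subseteq> Z" for Z'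
    unfolding M_def using card_mono[OF finZ that] by (intro power_increasing) auto
  show ?thesis
  proof (intro conjI exI[of _ "cm / M"] ballI)
    show "finite {z \<in> {a..b}. T z = 0}" using finZ unfolding Z_def .
    show "cm / M > 0" using cm_pos M1 by simp
    fix x assume x: "x \<in> {a..b}"
    have P0: "0 \<le> (\<Prod>z\<in>Z. \<bar>x - z\<bar>)" by (intro prod_nonneg) auto
    have "cm / M * (\<Prod>z\<in>Z. \<bar>x - z\<bar>) \<le> \<bar>T x\<bar>"
    proof (cases "x \<in> U")
      case True
      then obtain z where z: "z \<in> Z" "\<bar>x - z\<bar> < e z" unfolding U_def by (auto simp: dist_real_def)
      have split: "(\<Prod>z\<in>Z. \<bar>x - z\<bar>) = \<bar>x - z\<bar> * (\<Prod>w\<in>Z - {z}. \<bar>x - w\<bar>)"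
        using finZ z(1) by (simp add: prod.remove)
      have "(\<Prod>w\<in>Z - {z}. \<bar>x - w\<bar>) \<le> M" using fact1[of "Z - {z}" x] Mle[of "Z - {z}"] x by auto
      then have "cm / M * (\<Prod>z\<in>Z. \<bar>x - z\<bar>) \<le> cm / M * (\<bar>x - z\<bar> * M)"
        unfolding split using cm_pos M1 by (intro mult_left_mono) (auto intro: mult_left_mono)
      also have "\<dots> = cm * \<bar>x - z\<bar>" using M1 by simp
      also have "\<dots> \<le> c z * \<bar>x - z\<bar>" using cm_le(2)[OF z(1)] by (intro mult_right_mono) auto
      also have "\<dots> \<le> \<bar>T x\<bar>" using ec[OF z(1)] z(2) by blast
      finally show ?thesis .
    next
      case False
      then have xS: "x \<in> S0" unfolding S0_def using x by auto
      have "(\<Prod>z\<in>Z. \<bar>x - z\<bar>) \<le> M" using fact1[of Z x] Mle[of Z] x by auto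
      then have "cm / M * (\<Prod>z\<in>Z. \<bar>x - z\<bar>) \<le> cm / M * M" using cm_pos M1 by (intro mult_left_mono) auto
      also have "\<dots> = cm" using M1 by simp
      also have "\<dots> \<le> m0" by (rule cm_le(1))
      also have "\<dots> \<le> \<bar>T x\<bar>" by (rule m0(2)[OF xS])
      finally show ?thesis .
    qed
    then show "cm / M * (\<Prod>z\<in>{z \<in> {a..b}. T z = 0}. \<bar>x - z\<bar>) \<le> \<bar>T x\<bar>" unfolding Z_def .
  qed
qed


definition "mmf K B = sqrt (K\<^sup>2 - B\<^sup>2)"
definition "F1f K d B = mmf K B * cos (mmf K B * d) + B * sin (mmf K B * d)"
definition "F2f K d B = mmf K B * sin (mmf K B * d) - B * cos (mmf K B * d)"
definition "TTf K d B = F1f K d B * F2f K d B / mmf K B"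

lemma mm_pos: "\<bar>B\<bar> < K \<Longrightarrow> 0 < mmf K B"
  unfolding mmf_def using abs_less_sq[of B K] by simp

lemma mm_sq: "\<bar>B\<bar> < K \<Longrightarrow> (mmf K B)\<^sup>2 = K\<^sup>2 - B\<^sup>2"
  unfolding mmf_def using abs_less_sq[of B K] by simp

lemma dmm: assumes "\<bar>B\<bar> < K" shows "(mmf K has_real_derivative - B / mmf K B) (at B)"
proof -
  have p: "0 < K\<^sup>2 - B\<^sup>2" using abs_less_sq[of B K] assms by simp
  have "((\<lambda>B. sqrt (K\<^sup>2 - B\<^sup>2)) has_real_derivative (inverse (sqrt (K\<^sup>2 - B\<^sup>2)) / 2) * (- 2 * B)) (at B)"
  proof (rule DERIV_chain2[where f=sqrt and g="\<lambda>B. K\<^sup>2 - B\<^sup>2"])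
    show "DERIV sqrt (K\<^sup>2 - B\<^sup>2) :> inverse (sqrt (K\<^sup>2 - B\<^sup>2)) / 2" by (rule DERIV_real_sqrt[OF p])
    show "((\<lambda>B. K\<^sup>2 - B\<^sup>2) has_real_derivative - 2 * B) (at B)"
      by (auto intro!: derivative_eq_intros)
  qed
  moreover have "(inverse (sqrt (K\<^sup>2 - B\<^sup>2)) / 2) * (- 2 * B) = - B / mmf K B"
    unfolding mmf_def by (simp add: field_simps)
  ultimately show ?thesis unfolding mmf_def[abs_def] by simp
qed

lemma dF1: assumes "\<bar>B\<bar> < K"
  shows "(F1f K d has_real_derivative
     (- B / mmf K B) * (cos (mmf K B * d) - mmf K B * d * sin (mmf K B * d) + B * d * cos (mmf K B * d)) + sin (mmf K B * d)) (at B)"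
  unfolding F1f_def[abs_def]
  by (rule derivative_eq_intros dmm[OF assms] refl)+ (simp add: algebra_simps)

lemma dF2: assumes "\<bar>B\<bar> < K"
  shows "(F2f K d has_real_derivative
     (- B / mmf K B) * (sin (mmf K B * d) + mmf K B * d * cos (mmf K B * d) + B * d * sin (mmf K B * d)) - cos (mmf K B * d)) (at B)"
  unfolding F2f_def[abs_def]
  by (rule derivative_eq_intros dmm[OF assms] refl)+ (simp add: algebra_simps)

lemma sc_sq: "(sin x)\<^sup>2 + (cos x)\<^sup>2 = (1::real)" by simp

lemma F1_zero_D:
  assumes B: "\<bar>B\<bar> < K" "0 \<le> B" and d: "0 < d" and z: "F1f K d B = 0"
  shows "(- B / mmf K B) * (cos (mmf K B * d) - mmf K B * d * sin (mmf K B * d) + B * d * cos (mmf K B * d)) + sin (mmf K B * d) \<noteq> 0"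
proof -
  define m where "m = mmf K B"
  define c where "c = cos (m * d)"
  define s where "s = sin (m * d)"
  have m: "0 < m" unfolding m_def using mm_pos[OF B(1)] .
  have msq: "m * m = K\<^sup>2 - B\<^sup>2" unfolding m_def using mm_sq[OF B(1)] by (simp add: power2_eq_square)
  have mc: "m * c = - B * s" using z unfolding F1f_def m_def[symmetric] c_def[symmetric] s_def[symmetric] by simp
  have s0: "s \<noteq> 0"
  proof
    assume "s = 0"
    then have "c = 0" using mc m by simp
    then show False using sc_sq[of "m * d"] \<open>s = 0\<close> unfolding c_def s_def by simp
  qed
  define D where "D = (- B / m) * (c - m * d * s + B * d * c) + s"
  have "m * m * D = - B * (m * c) + B * (m * m) * d * s - B * B * d * (m * c) + m * m * s"
    unfolding D_def using m by (simp add: field_simps)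
  also have "\<dots> = s * (B * B + m * m) * (1 + B * d)" unfolding mc by (simp add: algebra_simps)
  also have "\<dots> = s * K\<^sup>2 * (1 + B * d)" unfolding msq by (simp add: power2_eq_square)
  finally have eq: "m * m * D = s * K\<^sup>2 * (1 + B * d)" .
  have "K \<noteq> 0" using B by auto
  moreover have "1 + B * d \<noteq> 0" using B d by (smt (verit) mult_nonneg_nonneg)
  ultimately have "m * m * D \<noteq> 0" unfolding eq using s0 by simp
  then show ?thesis unfolding D_def m_def c_def s_def by auto
qed

lemma F2_zero_D:
  assumes B: "\<bar>B\<bar> < K" "0 \<le> B" and d: "0 < d" and z: "F2f K d B = 0"
  shows "(- B / mmf K B) * (sin (mmf K B * d) + mmf K B * d * cos (mmf K B * d) + B * d * sin (mmf K B * d)) - cos (mmf K B * d) \<noteq> 0"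
proof -
  define m where "m = mmf K B"
  define c where "c = cos (m * d)"
  define s where "s = sin (m * d)"
  have m: "0 < m" unfolding m_def using mm_pos[OF B(1)] .
  have msq: "m * m = K\<^sup>2 - B\<^sup>2" unfolding m_def using mm_sq[OF B(1)] by (simp add: power2_eq_square)
  have ms: "m * s = B * c" using z unfolding F2f_def m_def[symmetric] c_def[symmetric] s_def[symmetric] by simp
  have c0: "c \<noteq> 0"
  proof
    assume "c = 0"
    then have "s = 0" using ms m by simp
    then show False using sc_sq[of "m * d"] \<open>c = 0\<close> unfolding c_def s_def by simp
  qed
  define D where "D = (- B / m) * (s + m * d * c + B * d * s) - c"
  have "m * m * D = - B * (m * s) - B * (m * m) * d * c - B * B * d * (m * s) - m * m * c"
    unfolding D_def using m by (simp add: field_simps)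
  also have "\<dots> = - c * (B * B + m * m) * (1 + B * d)" unfolding ms by (simp add: algebra_simps)
  also have "\<dots> = - c * K\<^sup>2 * (1 + B * d)" unfolding msq by (simp add: power2_eq_square)
  finally have eq: "m * m * D = - c * K\<^sup>2 * (1 + B * d)" .
  have "K \<noteq> 0" using B by auto
  moreover have "1 + B * d \<noteq> 0" using B d by (smt (verit) mult_nonneg_nonneg)
  ultimately have "m * m * D \<noteq> 0" unfolding eq using c0 by simp
  then show ?thesis unfolding D_def m_def c_def s_def by auto
qed

lemma F12_not_both:
  assumes B: "\<bar>B\<bar> < K" and z1: "F1f K d B = 0" and z2: "F2f K d B = 0"
  shows False
proof -
  define m where "m = mmf K B"
  define c where "c = cos (m * d)"
  define s where "s = sin (m * d)"
  have m: "0 < m" unfolding m_def using mm_pos[OF B(1)] .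
  have mc: "m * c = - B * s" using z1 unfolding F1f_def m_def[symmetric] c_def[symmetric] s_def[symmetric] by simp
  have ms: "m * s = B * c" using z2 unfolding F2f_def m_def[symmetric] c_def[symmetric] s_def[symmetric] by simp
  have "m * (m * c) = - B * (m * s)" unfolding mc by simp
  then have "(m * m + B * B) * c = 0" unfolding ms by (simp add: algebra_simps)
  moreover have "m * m + B * B > 0" using m by (smt (verit) mult_pos_pos zero_le_square)
  ultimately have "c = 0" by (metis mult_eq_0_iff less_irrefl)
  then have "s = 0" using ms m by simp
  then show False using sc_sq[of "m * d"] \<open>c = 0\<close> unfolding c_def s_def by simp
qed

lemma TT_alt1: "TTf K d = (\<lambda>B. F1f K d B * (F2f K d B / mmf K B))"
  unfolding TTf_def by (simp add: fun_eq_iff)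
lemma TT_alt2: "TTf K d = (\<lambda>B. (F1f K d B / mmf K B) * F2f K d B)"
  unfolding TTf_def by (simp add: fun_eq_iff)

lemma dTT_ex: assumes "\<bar>B\<bar> < K" shows "\<exists>D. (TTf K d has_real_derivative D) (at B)"
  unfolding TT_alt1
  using DERIV_mult[OF dF1[OF assms] DERIV_divide[OF dF2[OF assms] dmm[OF assms]]] mm_pos[OF assms] by auto

lemma TT_cont: assumes "\<bar>B\<bar> < K" shows "isCont (TTf K d) B"
  using dTT_ex[OF assms] DERIV_isCont by blast

lemma ex_nz1: "(f has_real_derivative D1 * a + Dq * 0) F \<Longrightarrow> D1 \<noteq> 0 \<Longrightarrow> a \<noteq> 0 \<Longrightarrow> \<exists>D. D \<noteq> 0 \<and> (f has_real_derivative D) F"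
  by (rule exI[of _ "D1 * a"]) simp
lemma ex_nz2: "(f has_real_derivative Dq * 0 + D2 * a) F \<Longrightarrow> D2 \<noteq> 0 \<Longrightarrow> a \<noteq> 0 \<Longrightarrow> \<exists>D. D \<noteq> 0 \<and> (f has_real_derivative D) F"
  by (rule exI[of _ "D2 * a"]) simp

lemma TT_simple:
  assumes B: "\<bar>B\<bar> < K" "0 \<le> B" and d: "0 < d" and z: "TTf K d B = 0"
  shows "\<exists>D. D \<noteq> 0 \<and> (TTf K d has_real_derivative D) (at B)"
proof -
  have m: "0 < mmf K B" using mm_pos[OF B(1)] .
  then have mnz: "mmf K B \<noteq> 0" by simp
  have "F1f K d B = 0 \<or> F2f K d B = 0" using z m unfolding TTf_def by simp
  then show ?thesis
  proof
    assume z1: "F1f K d B = 0"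
    have z2: "F2f K d B \<noteq> 0" using F12_not_both[OF B(1) z1] by blast
    note h = DERIV_mult[OF dF1[OF B(1), where d=d] DERIV_divide[OF dF2[OF B(1), where d=d] dmm[OF B(1)] mnz], unfolded z1, folded TT_alt1]
    show ?thesis by (rule ex_nz1[OF h F1_zero_D[OF B d z1]]) (use z2 m in simp)
  next
    assume z2: "F2f K d B = 0"
    have z1: "F1f K d B \<noteq> 0" using F12_not_both[OF B(1) _ z2] by blast
    note h = DERIV_mult[OF DERIV_divide[OF dF1[OF B(1), where d=d] dmm[OF B(1)] mnz] dF2[OF B(1), where d=d], unfolded z2, folded TT_alt2]
    show ?thesis by (rule ex_nz2[OF h F2_zero_D[OF B d z2]]) (use z1 m in simp)
  qed
qed


lemma sin_lip: "\<bar>sin (w::real) - sin z\<bar> \<le> \<bar>w - z\<bar>"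
proof -
  have "\<bar>sin w - sin z\<bar> = 2 * \<bar>sin ((w - z) / 2)\<bar> * \<bar>cos ((w + z) / 2)\<bar>"
    unfolding sin_diff_sin by (simp add: abs_mult)
  also have "\<dots> \<le> 2 * \<bar>(w - z) / 2\<bar> * 1"
    by (intro mult_mono abs_sin_x_le_abs_x) auto
  finally show ?thesis by simp
qed

lemma far_region:
  fixes K d B :: real
  assumes K: "0 < K" and d: "0 < d" and B: "0 \<le> B" "B < K"
    and m: "mmf K B \<le> min (1 / (2 * d)) (K / 2)"
  shows "K / 16 \<le> \<bar>TTf K d B\<bar>"
proof -
  define m where "m = mmf K B"
  have Bk: "\<bar>B\<bar> < K" using B by simp
  have mpos: "0 < m" unfolding m_def using mm_pos[OF Bk] .
  have msq: "m\<^sup>2 = K\<^sup>2 - B\<^sup>2" unfolding m_def using mm_sq[OF Bk] .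
  have m1: "m * d \<le> 1 / 2" using m d unfolding m_def[symmetric] by (simp add: field_simps)
  have m2: "m \<le> K / 2" using m unfolding m_def[symmetric] by simp
  define c where "c = cos (m * d)"
  define s where "s = sin (m * d)"
  have xd: "0 \<le> m * d" using mpos d by simp
  have c12: "1 / 2 \<le> c"
  proof -
    have "pi / 3 > 1" using pi_gt3 by simp
    then have "cos (pi / 3) \<le> cos (m * d)" using m1 xd pi_gt3 by (intro cos_monotone_0_pi_le) auto
    then show ?thesis unfolding c_def cos_60 .
  qed
  have s0: "0 \<le> s" unfolding s_def using xd m1 pi_gt3 by (intro sin_ge_zero) auto
  have sx: "s \<le> m * d" unfolding s_def by (rule sin_x_le_x[OF xd])
  have B34: "3 * K / 4 \<le> B"
  proof -
    have "m * m \<le> (K / 2) * (K / 2)" using m2 mpos by (intro mult_mono) auto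
    moreover have "B * B = K * K - m * m" using msq by (simp add: power2_eq_square)
    moreover have "0 \<le> K * K" by simp
    ultimately have "9 * (K * K) \<le> 16 * (B * B)" by linarith
    then have "(3 * K / 4)\<^sup>2 \<le> B\<^sup>2" by (simp add: power2_eq_square)
    then show ?thesis by (rule power2_le_imp_le) (use B in simp)
  qed
  have "0 \<le> B * s / m" using s0 B mpos by simp
  then have Ev: "1 / 2 \<le> c + B * s / m" using c12 by linarith
  have Od: "m * s - B * c \<le> - K / 8"
  proof -
    have "m * s \<le> m * (m * d)" using sx mpos by (intro mult_left_mono) auto
    also have "\<dots> \<le> m * (1 / 2)" using m1 mpos by (intro mult_left_mono) auto
    also have "\<dots> \<le> K / 4" using m2 by simp
    finally have ms: "m * s \<le> K / 4" .
    have "3 * K / 4 * (1 / 2) \<le> B * c" using B34 c12 K by (intro mult_mono) auto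
    then show ?thesis using ms by simp
  qed
  have TT: "TTf K d B = (c + B * s / m) * (m * s - B * c)"
    unfolding TTf_def F1f_def F2f_def m_def[symmetric] c_def[symmetric] s_def[symmetric] using mpos
    by (simp add: field_simps)
  have "1 / 2 * (K / 8) \<le> (c + B * s / m) * \<bar>m * s - B * c\<bar>"
  proof (intro mult_mono)
    show "0 \<le> c + B * s / m" using Ev by linarith
  qed (use Ev Od K in auto)
  moreover have "\<bar>c + B * s / m\<bar> = c + B * s / m" using Ev by (intro abs_of_nonneg) linarith
  ultimately show ?thesis unfolding TT abs_mult by simp
qed

lemma key_TT:
  fixes K d :: real
  assumes K: "0 < K" and d: "0 < d"
  defines "Z \<equiv> {z. 0 < z \<and> z < K \<and> TTf K d z = 0}"
  shows "finite Z \<and> (\<exists>C. \<forall>B. 0 < B \<and> B < K \<longrightarrow>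
           (B + \<bar>sin (2 * mmf K B * d) / mmf K B\<bar>) * (\<Prod>z\<in>Z. \<bar>B\<^sup>2 - z\<^sup>2\<bar>) \<le> C * \<bar>TTf K d B\<bar>)"
proof -
  define \<mu>s where "\<mu>s = min (1 / (2 * d)) (K / 2)"
  have \<mu>pos: "0 < \<mu>s" unfolding \<mu>s_def using K d by simp
  have \<mu>K: "\<mu>s \<le> K / 2" unfolding \<mu>s_def by simp
  have \<mu>sq: "\<mu>s\<^sup>2 < K\<^sup>2" using \<mu>K \<mu>pos K by (intro power_strict_mono) auto
  define Bs where "Bs = sqrt (K\<^sup>2 - \<mu>s\<^sup>2)"
  have Bs_sq: "Bs\<^sup>2 = K\<^sup>2 - \<mu>s\<^sup>2" unfolding Bs_def using \<mu>sq by simp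
  have Bs_pos: "0 < Bs" unfolding Bs_def using \<mu>sq by simp
  have Bs_lt: "Bs < K"
  proof -
    have "Bs\<^sup>2 < K\<^sup>2" using Bs_sq \<mu>pos by simp
    then show ?thesis using K Bs_pos by (smt (verit) power_mono)
  qed
  have m_hi: "mmf K B \<le> \<mu>s" if "Bs \<le> B" "B < K" for B
  proof -
    have "Bs\<^sup>2 \<le> B\<^sup>2" using that Bs_pos by (intro power_mono) auto
    then have "K\<^sup>2 - B\<^sup>2 \<le> \<mu>s\<^sup>2" using Bs_sq by simp
    then have "sqrt (K\<^sup>2 - B\<^sup>2) \<le> sqrt (\<mu>s\<^sup>2)" by (rule real_sqrt_le_mono)
    then show ?thesis unfolding mmf_def using \<mu>pos by simp
  qed
  have m_lo: "\<mu>s \<le> mmf K B" if "0 \<le> B" "B \<le> Bs" for B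
  proof -
    have "B\<^sup>2 \<le> Bs\<^sup>2" using that by (intro power_mono) auto
    then have "\<mu>s\<^sup>2 \<le> K\<^sup>2 - B\<^sup>2" using Bs_sq by simp
    then have "sqrt (\<mu>s\<^sup>2) \<le> sqrt (K\<^sup>2 - B\<^sup>2)" by (rule real_sqrt_le_mono)
    then show ?thesis unfolding mmf_def using \<mu>pos by simp
  qed
  have far: "K / 16 \<le> \<bar>TTf K d B\<bar>" if "Bs \<le> B" "B < K" for B
    using far_region[OF K d _ that(2)] m_hi[OF that] that Bs_pos unfolding \<mu>s_def by auto
  have cont: "continuous_on {0..Bs} (TTf K d)"
    by (rule continuous_at_imp_continuous_on) (use Bs_lt TT_cont in auto)
  have szb: "finite {z\<in>{0..Bs}. TTf K d z = 0} \<and> (\<exists>c>0. \<forall>x\<in>{0..Bs}. c * (\<Prod>z\<in>{z\<in>{0..Bs}. TTf K d z = 0}. \<bar>x - z\<bar>) \<le> \<bar>TTf K d x\<bar>)"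
    by (rule simple_zeros_bound[OF _ cont]) (use Bs_pos Bs_lt d TT_simple in auto)
  define Zs where "Zs = {z\<in>{0..Bs}. TTf K d z = 0}"
  obtain c0 where c0: "c0 > 0" "\<And>x. x \<in> {0..Bs} \<Longrightarrow> c0 * (\<Prod>z\<in>Zs. \<bar>x - z\<bar>) \<le> \<bar>TTf K d x\<bar>"
    using szb unfolding Zs_def by blast
  have finZs: "finite Zs" using szb unfolding Zs_def by blast
  have ZZ: "Z = Zs - {0}"
  proof
    show "Z \<subseteq> Zs - {0}"
    proof
      fix z assume z: "z \<in> Z"
      have "z < Bs"
      proof (rule ccontr)
        assume "\<not> z < Bs"
        moreover have "z < K" using z unfolding Z_def by auto
        ultimately have "K / 16 \<le> \<bar>TTf K d z\<bar>" using far[of z] by linarith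
        then show False using z K unfolding Z_def by auto
      qed
      then show "z \<in> Zs - {0}" using z unfolding Z_def Zs_def by auto
    qed
    show "Zs - {0} \<subseteq> Z" unfolding Z_def Zs_def using Bs_lt by auto
  qed
  have finZ: "finite Z" unfolding ZZ using finZs by simp
  define n where "n = card Z"
  have pr1: "(\<Prod>z\<in>Z. \<bar>B\<^sup>2 - z\<^sup>2\<bar>) \<le> (2 * K) ^ n * (\<Prod>z\<in>Z. \<bar>B - z\<bar>)" if "0 < B" "B < K" for B
  proof -
    have "(\<Prod>z\<in>Z. \<bar>B\<^sup>2 - z\<^sup>2\<bar>) \<le> (\<Prod>z\<in>Z. \<bar>B - z\<bar> * (2 * K))"
    proof (rule prod_mono)
      fix z assume z: "z \<in> Z"
      have e0: "B\<^sup>2 - z\<^sup>2 = (B - z) * (B + z)" by (simp add: power2_eq_square algebra_simps)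
      have e: "\<bar>B\<^sup>2 - z\<^sup>2\<bar> = \<bar>B - z\<bar> * (B + z)" unfolding e0 abs_mult using z that unfolding Z_def by simp
      show "0 \<le> \<bar>B\<^sup>2 - z\<^sup>2\<bar> \<and> \<bar>B\<^sup>2 - z\<^sup>2\<bar> \<le> \<bar>B - z\<bar> * (2 * K)"
        unfolding e using z that unfolding Z_def by (auto intro: mult_left_mono)
    qed
    also have "\<dots> = (2 * K) ^ n * (\<Prod>z\<in>Z. \<bar>B - z\<bar>)" unfolding n_def by (simp add: prod.distrib)
    finally show ?thesis .
  qed
  have pr2: "(\<Prod>z\<in>Z. \<bar>B\<^sup>2 - z\<^sup>2\<bar>) \<le> (K\<^sup>2) ^ n" if "0 < B" "B < K" for B
  proof -
    have "(\<Prod>z\<in>Z. \<bar>B\<^sup>2 - z\<^sup>2\<bar>) \<le> (\<Prod>z\<in>Z. K\<^sup>2)"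
    proof (rule prod_mono)
      fix z assume z: "z \<in> Z"
      have "B\<^sup>2 < K\<^sup>2" "z\<^sup>2 < K\<^sup>2" using z that unfolding Z_def by (auto intro: power_strict_mono)
      moreover have "0 \<le> B\<^sup>2" "0 \<le> z\<^sup>2" by auto
      ultimately show "0 \<le> \<bar>B\<^sup>2 - z\<^sup>2\<bar> \<and> \<bar>B\<^sup>2 - z\<^sup>2\<bar> \<le> K\<^sup>2" unfolding abs_le_iff by linarith
    qed
    then show ?thesis unfolding n_def by simp
  qed
  have S2b: "\<bar>sin (2 * mmf K B * d) / mmf K B\<bar> \<le> 2 * d" if "0 < B" "B < K" for B
  proof -
    have mp: "0 < mmf K B" using mm_pos[of B K] that by simp
    have "\<bar>sin (mmf K B * (2 * d)) / mmf K B\<bar> \<le> \<bar>2 * d\<bar>" by (rule sin_div_le[OF mp])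
    then show ?thesis using d by (simp add: mult_ac)
  qed
  have P0: "0 \<le> (\<Prod>z\<in>Z. \<bar>B - z\<bar>)" for B by (intro prod_nonneg) auto
  define C1 where "C1 = (K + 2 * d) * (K\<^sup>2) ^ n * 16 / K"
  define C2 where "C2 = (K + 2 * d) * (2 * K) ^ n / c0"
  define C3 where "C3 = (1 + 2 * d / \<mu>s) * (2 * K) ^ n / c0"
  have C1p: "0 \<le> C1" and C2p: "0 \<le> C2" and C3p: "0 \<le> C3"
    unfolding C1_def C2_def C3_def using K d c0 \<mu>pos by auto
  show ?thesis
  proof (intro conjI exI[of _ "C1 + C2 + C3"] allI impI)
    show "finite Z" by (rule finZ)
    fix B assume B: "0 < B \<and> B < K"
    define L where "L = (B + \<bar>sin (2 * mmf K B * d) / mmf K B\<bar>) * (\<Prod>z\<in>Z. \<bar>B\<^sup>2 - z\<^sup>2\<bar>)"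
    have Tn: "0 \<le> \<bar>TTf K d B\<bar>" by simp
    have PZ: "0 \<le> (\<Prod>z\<in>Z. \<bar>B\<^sup>2 - z\<^sup>2\<bar>)" by (intro prod_nonneg) auto
    have PZ2: "0 \<le> (2 * K) ^ n * (\<Prod>z\<in>Z. \<bar>B - z\<bar>)" using P0[of B] K by simp
    have "L \<le> C1 * \<bar>TTf K d B\<bar> \<or> L \<le> C2 * \<bar>TTf K d B\<bar> \<or> L \<le> C3 * \<bar>TTf K d B\<bar>"
    proof (cases "Bs \<le> B")
      case True
      have "L \<le> (K + 2 * d) * (K\<^sup>2) ^ n"
        unfolding L_def using S2b[of B] pr2[of B] B PZ K d by (intro mult_mono) auto
      also have "\<dots> = C1 * (K / 16)" unfolding C1_def using K by simp
      also have "\<dots> \<le> C1 * \<bar>TTf K d B\<bar>" using far[OF True] B C1p by (intro mult_left_mono) auto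
      finally show ?thesis by simp
    next
      case False
      then have BI: "B \<in> {0..Bs}" using B by auto
      have near: "c0 * (\<Prod>z\<in>Zs. \<bar>B - z\<bar>) \<le> \<bar>TTf K d B\<bar>" using c0(2)[OF BI] .
      show ?thesis
      proof (cases "0 \<in> Zs")
        case True
        have ZsI: "Zs = insert 0 Z" unfolding ZZ using True by auto
        have "0 \<notin> Z" unfolding Z_def by simp
        then have prZs: "(\<Prod>z\<in>Zs. \<bar>B - z\<bar>) = B * (\<Prod>z\<in>Z. \<bar>B - z\<bar>)"
          unfolding ZsI using finZ B by simp
        have T0: "TTf K d 0 = 0" using True unfolding Zs_def by simp
        have mK: "mmf K 0 = K" unfolding mmf_def using K by simp
        have sK: "sin (2 * K * d) = 0"
        proof -
          have "TTf K d 0 = K * (cos (K * d) * sin (K * d))"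
            unfolding TTf_def F1f_def F2f_def mK using K by (simp add: field_simps power2_eq_square)
          then have "cos (K * d) * sin (K * d) = 0" using T0 K by simp
          moreover have "sin (2 * K * d) = 2 * sin (K * d) * cos (K * d)" using sin_double[of "K * d"] by (simp add: mult.assoc)
          ultimately show ?thesis by auto
        qed
        define m where "m = mmf K B"
        have mp: "0 < m" unfolding m_def using mm_pos[of B K] B by simp
        have mlo: "\<mu>s \<le> m" unfolding m_def using m_lo BI by auto
        have msq: "m\<^sup>2 = K\<^sup>2 - B\<^sup>2" unfolding m_def using mm_sq[of B K] B by simp
        have KmB: "K - m \<le> B"
        proof -
          have "(K - B)\<^sup>2 \<le> m\<^sup>2" unfolding msq using B by (simp add: power2_eq_square algebra_simps mult_right_mono)
          then have "K - B \<le> m" by (rule power2_le_imp_le) (use mp in simp)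
          then show ?thesis by simp
        qed
        have "\<bar>sin (2 * m * d)\<bar> = \<bar>sin (2 * m * d) - sin (2 * K * d)\<bar>" using sK by simp
        also have "\<dots> \<le> \<bar>2 * m * d - 2 * K * d\<bar>" by (rule sin_lip)
        also have "\<dots> = 2 * d * (K - m)"
        proof -
          have "m\<^sup>2 \<le> K\<^sup>2" unfolding msq by simp
          then have "m \<le> K" by (rule power2_le_imp_le) (use K in simp)
          then show ?thesis using d by (simp add: abs_if algebra_simps mult_le_cancel_left_pos)
        qed
        also have "\<dots> \<le> 2 * d * B" using KmB d by simp
        finally have sb: "\<bar>sin (2 * m * d)\<bar> \<le> 2 * d * B" .
        have S2: "\<bar>sin (2 * m * d) / m\<bar> \<le> 2 * d / \<mu>s * B"
        proof -
          have "\<bar>sin (2 * m * d) / m\<bar> = \<bar>sin (2 * m * d)\<bar> / m" using mp by (simp add: abs_divide)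
          also have "\<dots> \<le> 2 * d * B / m" using sb mp by (intro divide_right_mono) auto
          also have "\<dots> \<le> 2 * d * B / \<mu>s" using mlo \<mu>pos d B by (intro divide_left_mono) auto
          finally show ?thesis by simp
        qed
        have "L \<le> ((1 + 2 * d / \<mu>s) * B) * ((2 * K) ^ n * (\<Prod>z\<in>Z. \<bar>B - z\<bar>))"
          unfolding L_def m_def[symmetric] using S2 pr1[of B] B PZ PZ2 \<mu>pos d by (intro mult_mono) (auto simp: algebra_simps)
        also have "\<dots> = (1 + 2 * d / \<mu>s) * (2 * K) ^ n * (\<Prod>z\<in>Zs. \<bar>B - z\<bar>)" unfolding prZs by simp
        also have "\<dots> = C3 * (c0 * (\<Prod>z\<in>Zs. \<bar>B - z\<bar>))" unfolding C3_def using c0 by simp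
        also have "\<dots> \<le> C3 * \<bar>TTf K d B\<bar>" using near C3p by (intro mult_left_mono) auto
        finally show ?thesis by simp
      next
        case False
        have ZsZ: "Zs = Z" unfolding ZZ using False by auto
        have "L \<le> (K + 2 * d) * ((2 * K) ^ n * (\<Prod>z\<in>Z. \<bar>B - z\<bar>))"
          unfolding L_def using S2b[of B] pr1[of B] B PZ PZ2 K d by (intro mult_mono) auto
        also have "\<dots> = C2 * (c0 * (\<Prod>z\<in>Zs. \<bar>B - z\<bar>))" unfolding C2_def ZsZ using c0 by simp
        also have "\<dots> \<le> C2 * \<bar>TTf K d B\<bar>" using near C2p by (intro mult_left_mono) auto
        finally show ?thesis by simp
      qed
    qed
    moreover have "C1 * \<bar>TTf K d B\<bar> \<le> (C1 + C2 + C3) * \<bar>TTf K d B\<bar>"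
      "C2 * \<bar>TTf K d B\<bar> \<le> (C1 + C2 + C3) * \<bar>TTf K d B\<bar>"
      "C3 * \<bar>TTf K d B\<bar> \<le> (C1 + C2 + C3) * \<bar>TTf K d B\<bar>"
      using C1p C2p C3p Tn by (intro mult_right_mono; linarith)+
    ultimately show "L \<le> (C1 + C2 + C3) * \<bar>TTf K d B\<bar>" by linarith
  qed
qed


lemma kappa_out: "\<bar>\<xi>\<bar> > k \<Longrightarrow> kappa k \<xi> = \<i> * of_real (sqrt (\<xi>\<^sup>2 - k\<^sup>2))"
  unfolding kappa_def by simp
lemma kappa_in: "\<bar>\<xi>\<bar> \<le> k \<Longrightarrow> kappa k \<xi> = of_real (sqrt (k\<^sup>2 - \<xi>\<^sup>2))"
  unfolding kappa_def by simp

lemma sq_lt_of_abs: "0 \<le> k \<Longrightarrow> k < \<bar>\<xi>\<bar> \<Longrightarrow> k\<^sup>2 < (\<xi>::real)\<^sup>2"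
  using abs_less_sq[of k \<xi>] by simp
lemma sq_gt_of_abs: "\<bar>\<xi>\<bar> < k \<Longrightarrow> (\<xi>::real)\<^sup>2 < k\<^sup>2"
  using abs_less_sq[of \<xi> k] by simp

lemma wronsk_b:
  assumes k: "0 < k1" "k1 < k2" and d: "0 < d" and xi: "k1 < \<bar>\<xi>\<bar>" "\<bar>\<xi>\<bar> < k2"
  defines "B \<equiv> sqrt (\<xi>\<^sup>2 - k1\<^sup>2)" and "K \<equiv> sqrt (k2\<^sup>2 - k1\<^sup>2)"
  shows "wronsk k1 k2 d \<xi> = of_real (2 * (exp (- B * d))\<^sup>2 * TTf K d B)"
    and "kappa k1 \<xi> = \<i> * of_real B" and "kappa k2 \<xi> = of_real (mmf K B)"
    and "0 < B" "B < K" "0 < mmf K B"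
    and "TTf K d B = (cos (mmf K B * d) + B * sin (mmf K B * d) / mmf K B) * (mmf K B * sin (mmf K B * d) - B * cos (mmf K B * d))"
proof -
  have x1: "k1\<^sup>2 < \<xi>\<^sup>2" using sq_lt_of_abs[of k1 \<xi>] k xi by simp
  have x2: "\<xi>\<^sup>2 < k2\<^sup>2" using sq_gt_of_abs[of \<xi> k2] xi by simp
  show Bp: "0 < B" unfolding B_def using x1 by simp
  show BK: "B < K" unfolding B_def K_def using x2 by simp
  have mm: "mmf K B = sqrt (k2\<^sup>2 - \<xi>\<^sup>2)" unfolding mmf_def B_def K_def using x1 x2 k
    by (simp add: power2_eq_square[symmetric])
  show mp: "0 < mmf K B" unfolding mm using x2 by simp
  show k1e: "kappa k1 \<xi> = \<i> * of_real B" unfolding B_def by (rule kappa_out[OF xi(1)])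
  show k2e: "kappa k2 \<xi> = of_real (mmf K B)" unfolding mm using xi by (intro kappa_in) simp
  show TT: "TTf K d B = (cos (mmf K B * d) + B * sin (mmf K B * d) / mmf K B) * (mmf K B * sin (mmf K B * d) - B * cos (mmf K B * d))"
    unfolding TTf_def F1f_def F2f_def using mp by (simp add: field_simps)
  have "wronsk k1 k2 d \<xi> = 2 * Fp (kappa k1 \<xi>) (kappa k2 \<xi>) d 0 * Fpd (kappa k1 \<xi>) (kappa k2 \<xi>) d 0"
    using wronsk_eq[OF k d] xi by auto
  also have "\<dots> = of_real (2 * (exp (- B * d))\<^sup>2 * TTf K d B)"
    unfolding k1e k2e regb_pieces(4)[OF Bp mp d] TT by (simp add: mult.assoc)
  finally show "wronsk k1 k2 d \<xi> = of_real (2 * (exp (- B * d))\<^sup>2 * TTf K d B)" .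
qed

lemma regb_final:
  assumes k: "0 < k1" "k1 < k2" and d: "0 < d"
  shows "\<exists>Cb. \<forall>\<xi> a b. k1 < \<bar>\<xi>\<bar> \<and> \<bar>\<xi>\<bar> < k2 \<and> \<bar>\<xi>\<bar> \<notin> wzeros k1 k2 d \<and> a < b \<longrightarrow>
     cmod (Fp (kappa k1 \<xi>) (kappa k2 \<xi>) d b) * cmod (Fp (kappa k1 \<xi>) (kappa k2 \<xi>) d (-a)) / cmod (wronsk k1 k2 d \<xi>)
       \<le> Cb * exp (- sqrt (\<xi>\<^sup>2 - k1\<^sup>2) * (b - a)) / (sqrt \<bar>\<xi>\<^sup>2 - k1\<^sup>2\<bar> * (\<Prod>\<zeta>\<in>wzeros k1 k2 d. \<bar>\<xi>\<^sup>2 - \<zeta>\<^sup>2\<bar>))"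
proof -
  define K where "K = sqrt (k2\<^sup>2 - k1\<^sup>2)"
  have k12: "k1\<^sup>2 < k2\<^sup>2" using k by (intro power_strict_mono) auto
  have Kp: "0 < K" unfolding K_def using k12 by simp
  have KK: "K\<^sup>2 = k2\<^sup>2 - k1\<^sup>2" unfolding K_def using k12 by simp
  define Z where "Z = {z. 0 < z \<and> z < K \<and> TTf K d z = 0}"
  obtain Ck where finZ: "finite Z" and Ck: "\<And>B. 0 < B \<Longrightarrow> B < K \<Longrightarrow>
           (B + \<bar>sin (2 * mmf K B * d) / mmf K B\<bar>) * (\<Prod>z\<in>Z. \<bar>B\<^sup>2 - z\<^sup>2\<bar>) \<le> Ck * \<bar>TTf K d B\<bar>"
    using key_TT[OF Kp d] unfolding Z_def by blast
  define n where "n = card Z"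
  define Cb where "Cb = (1 + 2 * K * d)\<^sup>2 * exp (2 * K * d) * \<bar>Ck\<bar> / 2 + K\<^sup>2 * \<bar>Ck\<bar> / 4 + (K\<^sup>2) ^ n / 2"
  show ?thesis
  proof (intro exI[of _ Cb] allI impI)
    fix \<xi> a b :: real
    assume as: "k1 < \<bar>\<xi>\<bar> \<and> \<bar>\<xi>\<bar> < k2 \<and> \<bar>\<xi>\<bar> \<notin> wzeros k1 k2 d \<and> a < b"
    then have xi: "k1 < \<bar>\<xi>\<bar>" "\<bar>\<xi>\<bar> < k2" and nz: "\<bar>\<xi>\<bar> \<notin> wzeros k1 k2 d" and ab: "a < b" by auto
    define B where "B = sqrt (\<xi>\<^sup>2 - k1\<^sup>2)"
    define m where "m = mmf K B"
    note wb = wronsk_b[OF k d xi, folded B_def K_def, folded m_def]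
    have x1: "k1\<^sup>2 < \<xi>\<^sup>2" using sq_lt_of_abs[of k1 \<xi>] k xi by simp
    have Bsq: "B\<^sup>2 = \<xi>\<^sup>2 - k1\<^sup>2" unfolding B_def using x1 by simp
    have msq: "m\<^sup>2 = K\<^sup>2 - B\<^sup>2" unfolding m_def using mm_sq[of B K] wb(4,5) by simp
    have sqB: "sqrt \<bar>\<xi>\<^sup>2 - k1\<^sup>2\<bar> = B" unfolding B_def using x1 by simp
    have T0: "TTf K d B \<noteq> 0"
    proof
      assume T: "TTf K d B = 0"
      have xa: "k1 < \<bar>\<bar>\<xi>\<bar>\<bar>" "\<bar>\<bar>\<xi>\<bar>\<bar> < k2" using xi by auto
      have "wronsk k1 k2 d \<bar>\<xi>\<bar> = of_real (2 * (exp (- B * d))\<^sup>2 * TTf K d B)"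
        using wronsk_b(1)[OF k d xa] unfolding B_def K_def by simp
      then have "wronsk k1 k2 d \<bar>\<xi>\<bar> = 0" using T by simp
      then show False using nz xi unfolding wzeros_def by auto
    qed
    have wz: "\<zeta> \<in> wzeros k1 k2 d \<longleftrightarrow> k1 < \<zeta> \<and> \<zeta> < k2 \<and> TTf K d (sqrt (\<zeta>\<^sup>2 - k1\<^sup>2)) = 0" for \<zeta>
    proof -
      have "wronsk k1 k2 d \<zeta> = 0 \<longleftrightarrow> TTf K d (sqrt (\<zeta>\<^sup>2 - k1\<^sup>2)) = 0" if "k1 < \<zeta>" "\<zeta> < k2"
      proof -
        have za: "k1 < \<bar>\<zeta>\<bar>" "\<bar>\<zeta>\<bar> < k2" using that k by auto
        show ?thesis using wronsk_b(1)[OF k d za] unfolding K_def by simp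
      qed
      then show ?thesis unfolding wzeros_def by auto
    qed
    have prod_eq: "(\<Prod>\<zeta>\<in>wzeros k1 k2 d. \<bar>\<xi>\<^sup>2 - \<zeta>\<^sup>2\<bar>) = (\<Prod>z\<in>Z. \<bar>B\<^sup>2 - z\<^sup>2\<bar>)"
    proof (rule prod.reindex_bij_witness[where j="\<lambda>\<zeta>. sqrt (\<zeta>\<^sup>2 - k1\<^sup>2)" and i="\<lambda>z. sqrt (z\<^sup>2 + k1\<^sup>2)"])
      fix \<zeta> assume z: "\<zeta> \<in> wzeros k1 k2 d"
      then have zz: "k1 < \<zeta>" "\<zeta> < k2" and T: "TTf K d (sqrt (\<zeta>\<^sup>2 - k1\<^sup>2)) = 0" using wz by auto
      have z1: "k1\<^sup>2 < \<zeta>\<^sup>2" using zz k by (intro power_strict_mono) auto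
      have z2: "\<zeta>\<^sup>2 < k2\<^sup>2" using zz k by (intro power_strict_mono) auto
      show "sqrt ((sqrt (\<zeta>\<^sup>2 - k1\<^sup>2))\<^sup>2 + k1\<^sup>2) = \<zeta>" using z1 zz k by simp
      show "sqrt (\<zeta>\<^sup>2 - k1\<^sup>2) \<in> Z" unfolding Z_def K_def using z1 z2 T K_def by simp
      show "\<bar>B\<^sup>2 - (sqrt (\<zeta>\<^sup>2 - k1\<^sup>2))\<^sup>2\<bar> = \<bar>\<xi>\<^sup>2 - \<zeta>\<^sup>2\<bar>" unfolding Bsq using z1 by simp
    next
      fix z assume z: "z \<in> Z"
      then have zz: "0 < z" "z < K" and T: "TTf K d z = 0" unfolding Z_def by auto
      show "sqrt ((sqrt (z\<^sup>2 + k1\<^sup>2))\<^sup>2 - k1\<^sup>2) = z" using zz by simp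
      have "z\<^sup>2 < K\<^sup>2" using zz by (intro power_strict_mono) auto
      then have zk: "z\<^sup>2 + k1\<^sup>2 < k2\<^sup>2" using KK by simp
      have "k1\<^sup>2 < z\<^sup>2 + k1\<^sup>2" using zz by simp
      then have "sqrt (k1\<^sup>2) < sqrt (z\<^sup>2 + k1\<^sup>2)" by (rule real_sqrt_less_mono)
      then have l: "k1 < sqrt (z\<^sup>2 + k1\<^sup>2)" using k by simp
      have "sqrt (z\<^sup>2 + k1\<^sup>2) < sqrt (k2\<^sup>2)" using zk by (rule real_sqrt_less_mono)
      then have u: "sqrt (z\<^sup>2 + k1\<^sup>2) < k2" using k by simp
      show "sqrt (z\<^sup>2 + k1\<^sup>2) \<in> wzeros k1 k2 d" unfolding wz using l u T zz by simp
    qed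
    have finW: "0 < (\<Prod>\<zeta>\<in>wzeros k1 k2 d. \<bar>\<xi>\<^sup>2 - \<zeta>\<^sup>2\<bar>)"
    proof (cases "finite (wzeros k1 k2 d)")
      case True
      show ?thesis
      proof (intro prod_pos ballI)
        fix \<zeta> assume z: "\<zeta> \<in> wzeros k1 k2 d"
        then have "0 < \<zeta>" using k unfolding wzeros_def by auto
        moreover have "\<bar>\<xi>\<bar> \<noteq> \<zeta>" using z nz by auto
        ultimately have "\<xi>\<^sup>2 \<noteq> \<zeta>\<^sup>2" by (metis abs_of_pos real_sqrt_abs)
        then show "0 < \<bar>\<xi>\<^sup>2 - \<zeta>\<^sup>2\<bar>" by simp
      qed
    qed simp
    have PZ: "0 < (\<Prod>z\<in>Z. \<bar>B\<^sup>2 - z\<^sup>2\<bar>)" using finW prod_eq by simp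
    have P0: "(\<Prod>z\<in>Z. \<bar>B\<^sup>2 - z\<^sup>2\<bar>) \<le> (K\<^sup>2) ^ n"
    proof -
      have "(\<Prod>z\<in>Z. \<bar>B\<^sup>2 - z\<^sup>2\<bar>) \<le> (\<Prod>z\<in>Z. K\<^sup>2)"
      proof (rule prod_mono)
        fix z assume z: "z \<in> Z"
        have "B\<^sup>2 < K\<^sup>2" "z\<^sup>2 < K\<^sup>2" using z wb(4,5) unfolding Z_def by (auto intro: power_strict_mono)
        moreover have "0 \<le> B\<^sup>2" "0 \<le> z\<^sup>2" by auto
        ultimately show "0 \<le> \<bar>B\<^sup>2 - z\<^sup>2\<bar> \<and> \<bar>B\<^sup>2 - z\<^sup>2\<bar> \<le> K\<^sup>2" unfolding abs_le_iff by linarith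
      qed
      then show ?thesis unfolding n_def by simp
    qed
    define P where "P = (\<Prod>z\<in>Z. \<bar>B\<^sup>2 - z\<^sup>2\<bar>)"
    define T where "T = TTf K d B"
    have Tp: "0 < \<bar>T\<bar>" using T0 unfolding T_def by simp
    have CkB: "B * P \<le> \<bar>Ck\<bar> * \<bar>T\<bar>" and CkS: "\<bar>sin (2 * m * d) / m\<bar> * P \<le> \<bar>Ck\<bar> * \<bar>T\<bar>"
    proof -
      define S where "S = \<bar>sin (2 * m * d) / m\<bar>"
      have h: "(B + S) * P \<le> Ck * \<bar>T\<bar>" unfolding P_def T_def m_def S_def using Ck[OF wb(4,5)] .
      then have h': "B * P + S * P \<le> Ck * \<bar>T\<bar>" by (simp only: distrib_right)
      have "Ck * \<bar>T\<bar> \<le> \<bar>Ck\<bar> * \<bar>T\<bar>" by (intro mult_right_mono) auto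
      moreover have "0 \<le> S * P" "0 \<le> B * P" using PZ wb(4) unfolding P_def S_def by auto
      ultimately have "B * P \<le> \<bar>Ck\<bar> * \<bar>T\<bar>" "S * P \<le> \<bar>Ck\<bar> * \<bar>T\<bar>"
        using h' by linarith+
      then show "B * P \<le> \<bar>Ck\<bar> * \<bar>T\<bar>" "\<bar>sin (2 * m * d) / m\<bar> * P \<le> \<bar>Ck\<bar> * \<bar>T\<bar>" unfolding S_def .
    qed
    have rb: "cmod (Fp (\<i> * of_real B) (of_real m) d b) * cmod (Fp (\<i> * of_real B) (of_real m) d (-a)) / cmod (2 * Fp (\<i> * of_real B) (of_real m) d 0 * Fpd (\<i> * of_real B) (of_real m) d 0)
       \<le> exp (- B * (b - a)) * ((1 + 2 * B * d)\<^sup>2 * exp (2 * B * d) / (2 * \<bar>T\<bar>) + (B\<^sup>2 + m\<^sup>2) * \<bar>sin (2 * m * d) / m\<bar> / (4 * B * \<bar>T\<bar>) + 1 / (2 * B))"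
      using regb_bound[OF wb(4) wb(6) d ab] wb(7) T0 unfolding T_def m_def by simp
    have Weq: "wronsk k1 k2 d \<xi> = 2 * Fp (\<i> * of_real B) (of_real m) d 0 * Fpd (\<i> * of_real B) (of_real m) d 0"
      using wronsk_eq[OF k d] xi wb(2,3) by auto
    define X where "X = (1 + 2 * B * d)\<^sup>2 * exp (2 * B * d) / (2 * \<bar>T\<bar>) + (B\<^sup>2 + m\<^sup>2) * \<bar>sin (2 * m * d) / m\<bar> / (4 * B * \<bar>T\<bar>) + 1 / (2 * B)"
    have XBP: "X * (B * P) \<le> Cb"
    proof -
      have G: "(1 + 2 * B * d)\<^sup>2 * exp (2 * B * d) \<le> (1 + 2 * K * d)\<^sup>2 * exp (2 * K * d)"
        using wb(4,5) d by (intro mult_mono power_mono) auto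
      have mK: "B\<^sup>2 + m\<^sup>2 = K\<^sup>2" using msq by simp
      have t1: "(1 + 2 * B * d)\<^sup>2 * exp (2 * B * d) / (2 * \<bar>T\<bar>) * (B * P) \<le> (1 + 2 * K * d)\<^sup>2 * exp (2 * K * d) * \<bar>Ck\<bar> / 2"
      proof -
        have "(1 + 2 * B * d)\<^sup>2 * exp (2 * B * d) / (2 * \<bar>T\<bar>) * (B * P) = (1 + 2 * B * d)\<^sup>2 * exp (2 * B * d) * (B * P) / (2 * \<bar>T\<bar>)" by simp
        also have "\<dots> \<le> (1 + 2 * K * d)\<^sup>2 * exp (2 * K * d) * (\<bar>Ck\<bar> * \<bar>T\<bar>) / (2 * \<bar>T\<bar>)"
        proof (rule divide_right_mono)
          show "(1 + 2 * B * d)\<^sup>2 * exp (2 * B * d) * (B * P) \<le> (1 + 2 * K * d)\<^sup>2 * exp (2 * K * d) * (\<bar>Ck\<bar> * \<bar>T\<bar>)"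
            by (rule mult_mono[OF G CkB]) (use PZ wb(4) in \<open>auto simp: P_def\<close>)
        qed simp
        also have "\<dots> = (1 + 2 * K * d)\<^sup>2 * exp (2 * K * d) * \<bar>Ck\<bar> / 2" using Tp by simp
        finally show ?thesis .
      qed
      have t2: "(B\<^sup>2 + m\<^sup>2) * \<bar>sin (2 * m * d) / m\<bar> / (4 * B * \<bar>T\<bar>) * (B * P) \<le> K\<^sup>2 * \<bar>Ck\<bar> / 4"
      proof -
        have "(B\<^sup>2 + m\<^sup>2) * \<bar>sin (2 * m * d) / m\<bar> / (4 * B * \<bar>T\<bar>) * (B * P) = K\<^sup>2 * (\<bar>sin (2 * m * d) / m\<bar> * P) / (4 * \<bar>T\<bar>)"
          unfolding mK using wb(4) Tp by (simp add: field_simps)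
        also have "\<dots> \<le> K\<^sup>2 * (\<bar>Ck\<bar> * \<bar>T\<bar>) / (4 * \<bar>T\<bar>)"
          using CkS by (intro divide_right_mono mult_left_mono) auto
        also have "\<dots> = K\<^sup>2 * \<bar>Ck\<bar> / 4" using Tp by simp
        finally show ?thesis .
      qed
      have t3: "1 / (2 * B) * (B * P) \<le> (K\<^sup>2) ^ n / 2" using P0 wb(4) unfolding P_def by simp
      have "X * (B * P) = (1 + 2 * B * d)\<^sup>2 * exp (2 * B * d) / (2 * \<bar>T\<bar>) * (B * P)
          + (B\<^sup>2 + m\<^sup>2) * \<bar>sin (2 * m * d) / m\<bar> / (4 * B * \<bar>T\<bar>) * (B * P) + 1 / (2 * B) * (B * P)"
        unfolding X_def by (simp add: distrib_right)
      also have "\<dots> \<le> Cb" unfolding Cb_def using t1 t2 t3 by linarith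
      finally show ?thesis .
    qed
    have BP: "0 < B * P" using PZ wb(4) unfolding P_def by simp
    have "cmod (Fp (kappa k1 \<xi>) (kappa k2 \<xi>) d b) * cmod (Fp (kappa k1 \<xi>) (kappa k2 \<xi>) d (-a)) / cmod (wronsk k1 k2 d \<xi>)
          \<le> exp (- B * (b - a)) * X" unfolding Weq wb(2,3) X_def using rb by simp
    also have "\<dots> = exp (- B * (b - a)) * (X * (B * P)) / (B * P)"
    proof -
      have "B \<noteq> 0" "P \<noteq> 0" using BP by auto
      then show ?thesis by simp
    qed
    also have "\<dots> \<le> exp (- B * (b - a)) * Cb / (B * P)"
      using XBP BP by (intro divide_right_mono mult_left_mono) auto
    finally show "cmod (Fp (kappa k1 \<xi>) (kappa k2 \<xi>) d b) * cmod (Fp (kappa k1 \<xi>) (kappa k2 \<xi>) d (-a)) / cmod (wronsk k1 k2 d \<xi>)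
       \<le> Cb * exp (- sqrt (\<xi>\<^sup>2 - k1\<^sup>2) * (b - a)) / (sqrt \<bar>\<xi>\<^sup>2 - k1\<^sup>2\<bar> * (\<Prod>\<zeta>\<in>wzeros k1 k2 d. \<bar>\<xi>\<^sup>2 - \<zeta>\<^sup>2\<bar>))"
      unfolding sqB prod_eq B_def[symmetric] P_def[symmetric] by (simp add: mult_ac)
  qed
qed


lemma rega_final:
  assumes k: "0 < k1" "k1 < k2" and d: "0 < d"
  shows "\<exists>Ca. \<forall>\<xi> a b. k2 < \<bar>\<xi>\<bar> \<and> a < b \<longrightarrow>
     cmod (Fp (kappa k1 \<xi>) (kappa k2 \<xi>) d b) * cmod (Fp (kappa k1 \<xi>) (kappa k2 \<xi>) d (-a)) / cmod (wronsk k1 k2 d \<xi>)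
       \<le> Ca / (1 + \<bar>\<xi>\<bar>) * exp (- sqrt (\<xi>\<^sup>2 - k2\<^sup>2) * (b - a)) \<and>
     ((b \<le> -d \<or> d \<le> a \<or> (a \<le> -d \<and> d \<le> b)) \<longrightarrow>
     cmod (Fp (kappa k1 \<xi>) (kappa k2 \<xi>) d b) * cmod (Fp (kappa k1 \<xi>) (kappa k2 \<xi>) d (-a)) / cmod (wronsk k1 k2 d \<xi>)
       \<le> Ca / (1 + \<bar>\<xi>\<bar>) * exp (- sqrt (\<xi>\<^sup>2 - k1\<^sup>2) * (b - a)))"
proof -
  define K where "K = sqrt (k2\<^sup>2 - k1\<^sup>2)"
  have k12: "k1\<^sup>2 < k2\<^sup>2" using k by (intro power_strict_mono) auto
  have Kp: "0 < K" unfolding K_def using k12 by simp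
  have KK: "K\<^sup>2 = k2\<^sup>2 - k1\<^sup>2" unfolding K_def using k12 by simp
  define Cst where "Cst = max (exp (2 * K * d) + 1) ((2 + 4 * K * d)\<^sup>2)"
  have Cst0: "0 \<le> Cst" unfolding Cst_def by (simp add: le_max_iff_disj)
  define Ca where "Ca = Cst * (1 + k2) / K"
  show ?thesis
  proof (intro exI[of _ Ca] allI impI)
    fix \<xi> a b :: real assume as: "k2 < \<bar>\<xi>\<bar> \<and> a < b"
    then have xi: "k2 < \<bar>\<xi>\<bar>" and ab: "a < b" by auto
    define A where "A = sqrt (\<xi>\<^sup>2 - k2\<^sup>2)"
    define B where "B = sqrt (\<xi>\<^sup>2 - k1\<^sup>2)"
    have x2: "k2\<^sup>2 < \<xi>\<^sup>2" using sq_lt_of_abs[of k2 \<xi>] k xi by simp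
    have Ap: "0 < A" unfolding A_def using x2 by simp
    have AB: "A < B" unfolding A_def B_def using k12 by simp
    have Asq: "A\<^sup>2 = \<xi>\<^sup>2 - k2\<^sup>2" unfolding A_def using x2 by simp
    have Bsq: "B\<^sup>2 = \<xi>\<^sup>2 - k1\<^sup>2" unfolding B_def using x2 k12 by simp
    have BK: "B\<^sup>2 - A\<^sup>2 = K\<^sup>2" using Asq Bsq KK by simp
    have Bp: "0 < B" using Ap AB by simp
    have k1e: "kappa k1 \<xi> = \<i> * of_real B" unfolding B_def using xi k by (intro kappa_out) auto
    have k2e: "kappa k2 \<xi> = \<i> * of_real A" unfolding A_def using xi by (intro kappa_out) auto
    have Weq: "wronsk k1 k2 d \<xi> = 2 * Fp (\<i> * of_real B) (\<i> * of_real A) d 0 * Fpd (\<i> * of_real B) (\<i> * of_real A) d 0"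
      using wronsk_eq[OF k d] xi k k1e k2e by auto
    note rb = rega_bound[OF Ap AB Kp BK d ab, folded Cst_def]
    have KB: "K \<le> B"
    proof -
      have "0 \<le> A\<^sup>2" by simp
      then have "K\<^sup>2 \<le> B\<^sup>2" using BK by linarith
      then show ?thesis by (rule power2_le_imp_le) (use Bp in simp)
    qed
    have Kxi: "K * \<bar>\<xi>\<bar> \<le> B * k2"
    proof -
      have "(K * \<bar>\<xi>\<bar>)\<^sup>2 = K\<^sup>2 * (B\<^sup>2 + k1\<^sup>2)" using Bsq by (simp add: power_mult_distrib)
      also have "\<dots> \<le> B\<^sup>2 * (K\<^sup>2 + k1\<^sup>2)"
      proof -
        have "K\<^sup>2 * k1\<^sup>2 \<le> B\<^sup>2 * k1\<^sup>2" using KB Kp by (intro mult_right_mono power_mono) auto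
        then show ?thesis by (simp add: algebra_simps)
      qed
      also have "\<dots> = (B * k2)\<^sup>2" using KK by (simp add: power_mult_distrib)
      finally show ?thesis by (rule power2_le_imp_le) (use Bp k in simp)
    qed
    have CB: "Cst / B \<le> Ca / (1 + \<bar>\<xi>\<bar>)"
    proof -
      have "K * (1 + \<bar>\<xi>\<bar>) \<le> B * (1 + k2)" using KB Kxi by (simp add: algebra_simps)
      then have "Cst * (K * (1 + \<bar>\<xi>\<bar>)) \<le> Cst * (B * (1 + k2))" using Cst0 by (intro mult_left_mono)
      then have "Cst * (K * (1 + \<bar>\<xi>\<bar>)) / (B * K) \<le> Cst * (B * (1 + k2)) / (B * K)"
        using Bp Kp by (intro divide_right_mono) auto
      moreover have "Cst * (K * (1 + \<bar>\<xi>\<bar>)) / (B * K) = Cst / B * (1 + \<bar>\<xi>\<bar>)" using Bp Kp by simp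
      moreover have "Cst * (B * (1 + k2)) / (B * K) = Ca" unfolding Ca_def using Bp Kp by simp
      ultimately have "Cst / B * (1 + \<bar>\<xi>\<bar>) \<le> Ca" by simp
      moreover have "0 < 1 + \<bar>\<xi>\<bar>" by simp
      ultimately show ?thesis by (simp add: pos_le_divide_eq)
    qed
    have R_def: "cmod (Fp (kappa k1 \<xi>) (kappa k2 \<xi>) d b) * cmod (Fp (kappa k1 \<xi>) (kappa k2 \<xi>) d (-a)) / cmod (wronsk k1 k2 d \<xi>)
        = cmod (Fp (\<i> * of_real B) (\<i> * of_real A) d b) * cmod (Fp (\<i> * of_real B) (\<i> * of_real A) d (-a)) / cmod (2 * Fp (\<i> * of_real B) (\<i> * of_real A) d 0 * Fpd (\<i> * of_real B) (\<i> * of_real A) d 0)"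
      unfolding Weq k1e k2e ..
    have r1: "cmod (Fp (kappa k1 \<xi>) (kappa k2 \<xi>) d b) * cmod (Fp (kappa k1 \<xi>) (kappa k2 \<xi>) d (-a)) / cmod (wronsk k1 k2 d \<xi>)
       \<le> Ca / (1 + \<bar>\<xi>\<bar>) * exp (- sqrt (\<xi>\<^sup>2 - k2\<^sup>2) * (b - a))"
      unfolding R_def A_def[symmetric] using rb(1) CB by (smt (verit) exp_gt_zero mult_right_mono)
    have r2: "cmod (Fp (kappa k1 \<xi>) (kappa k2 \<xi>) d b) * cmod (Fp (kappa k1 \<xi>) (kappa k2 \<xi>) d (-a)) / cmod (wronsk k1 k2 d \<xi>)
       \<le> Ca / (1 + \<bar>\<xi>\<bar>) * exp (- sqrt (\<xi>\<^sup>2 - k1\<^sup>2) * (b - a))" if o: "b \<le> -d \<or> d \<le> a \<or> (a \<le> -d \<and> d \<le> b)"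
      unfolding R_def B_def[symmetric] using rb(2)[OF o] CB by (smt (verit) exp_gt_zero mult_right_mono)
    show "cmod (Fp (kappa k1 \<xi>) (kappa k2 \<xi>) d b) * cmod (Fp (kappa k1 \<xi>) (kappa k2 \<xi>) d (-a)) / cmod (wronsk k1 k2 d \<xi>)
       \<le> Ca / (1 + \<bar>\<xi>\<bar>) * exp (- sqrt (\<xi>\<^sup>2 - k2\<^sup>2) * (b - a)) \<and>
     ((b \<le> -d \<or> d \<le> a \<or> (a \<le> -d \<and> d \<le> b)) \<longrightarrow>
     cmod (Fp (kappa k1 \<xi>) (kappa k2 \<xi>) d b) * cmod (Fp (kappa k1 \<xi>) (kappa k2 \<xi>) d (-a)) / cmod (wronsk k1 k2 d \<xi>)
       \<le> Ca / (1 + \<bar>\<xi>\<bar>) * exp (- sqrt (\<xi>\<^sup>2 - k1\<^sup>2) * (b - a)))"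
      using r1 r2 by blast
  qed
qed

lemma regc_final:
  assumes k: "0 < k1" "k1 < k2" and d: "0 < d"
  shows "\<exists>Cc. \<forall>\<xi> a b. \<bar>\<xi>\<bar> < k1 \<and> a < b \<longrightarrow>
     cmod (Fp (kappa k1 \<xi>) (kappa k2 \<xi>) d b) * cmod (Fp (kappa k1 \<xi>) (kappa k2 \<xi>) d (-a)) / cmod (wronsk k1 k2 d \<xi>)
       \<le> Cc / sqrt \<bar>\<xi>\<^sup>2 - k1\<^sup>2\<bar>"
proof -
  define Cc where "Cc = (1 + 2 * d * k1) * (2 + 2 * d * k1)"
  show ?thesis
  proof (intro exI[of _ Cc] allI impI)
    fix \<xi> a b :: real assume as: "\<bar>\<xi>\<bar> < k1 \<and> a < b"
    then have xi: "\<bar>\<xi>\<bar> < k1" and ab: "a < b" by auto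
    define kr where "kr = sqrt (k1\<^sup>2 - \<xi>\<^sup>2)"
    define mr where "mr = sqrt (k2\<^sup>2 - \<xi>\<^sup>2)"
    have x1: "\<xi>\<^sup>2 < k1\<^sup>2" using sq_gt_of_abs[OF xi] .
    have k12: "k1\<^sup>2 < k2\<^sup>2" using k by (intro power_strict_mono) auto
    have krp: "0 < kr" unfolding kr_def using x1 by simp
    have mrp: "0 < mr" unfolding mr_def using x1 k12 by simp
    have krk: "kr \<le> k1"
    proof -
      have "sqrt (k1\<^sup>2 - \<xi>\<^sup>2) \<le> sqrt (k1\<^sup>2)" by (rule real_sqrt_le_mono) simp
      then show ?thesis unfolding kr_def using k by simp
    qed
    have sq: "sqrt \<bar>\<xi>\<^sup>2 - k1\<^sup>2\<bar> = kr" unfolding kr_def using x1 by (simp add: abs_if)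
    have k1e: "kappa k1 \<xi> = of_real kr" unfolding kr_def using xi by (intro kappa_in) simp
    have k2e: "kappa k2 \<xi> = of_real mr" unfolding mr_def using xi k by (intro kappa_in) simp
    have Weq: "wronsk k1 k2 d \<xi> = 2 * Fp (of_real kr) (of_real mr) d 0 * Fpd (of_real kr) (of_real mr) d 0"
      using wronsk_eq[OF k d] xi k k1e k2e by auto
    have bc: "cmod (Fp (of_real kr) (of_real mr) d b) * cmod (Fp (of_real kr) (of_real mr) d (-a))
      \<le> (1 + 2*d*kr) * (2 + 2*d*kr) / kr * cmod (wronsk k1 k2 d \<xi>)"
      unfolding Weq by (rule bound_c[OF krp mrp d ab])
    have Cle: "(1 + 2*d*kr) * (2 + 2*d*kr) \<le> Cc" unfolding Cc_def using krk d krp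
      by (intro mult_mono) (auto intro: mult_left_mono)
    show "cmod (Fp (kappa k1 \<xi>) (kappa k2 \<xi>) d b) * cmod (Fp (kappa k1 \<xi>) (kappa k2 \<xi>) d (-a)) / cmod (wronsk k1 k2 d \<xi>)
       \<le> Cc / sqrt \<bar>\<xi>\<^sup>2 - k1\<^sup>2\<bar>"
    proof (cases "cmod (wronsk k1 k2 d \<xi>) = 0")
      case True
      then show ?thesis unfolding sq Cc_def using krp d k by simp
    next
      case False
      then have wp: "0 < cmod (wronsk k1 k2 d \<xi>)" by simp
      have "cmod (Fp (kappa k1 \<xi>) (kappa k2 \<xi>) d b) * cmod (Fp (kappa k1 \<xi>) (kappa k2 \<xi>) d (-a)) / cmod (wronsk k1 k2 d \<xi>)
          \<le> (1 + 2*d*kr) * (2 + 2*d*kr) / kr * cmod (wronsk k1 k2 d \<xi>) / cmod (wronsk k1 k2 d \<xi>)"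
        unfolding k1e k2e using bc wp by (intro divide_right_mono) auto
      also have "\<dots> = (1 + 2*d*kr) * (2 + 2*d*kr) / kr" using wp by simp
      also have "\<dots> \<le> Cc / kr" using Cle krp by (intro divide_right_mono) auto
      finally show ?thesis unfolding sq .
    qed
  qed
qed


theorem theorem3:
  fixes k1 k2 d :: real
  assumes "0 < k1" and "k1 < k2" and "0 < d"
  shows "\<exists>C::real. \<forall>\<xi> x y.
     \<bar>\<xi>\<bar> \<noteq> k1 \<and> \<bar>\<xi>\<bar> \<noteq> k2 \<and> \<bar>\<xi>\<bar> \<notin> wzeros k1 k2 d \<and> x \<noteq> y \<longrightarrow>
     (let a = min x y; b = max x y;
          A = sqrt (\<xi>\<^sup>2 - k2\<^sup>2); B = sqrt (\<xi>\<^sup>2 - k1\<^sup>2);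
          R = cmod (resolv k1 k2 d \<xi> x y) in
      (\<bar>\<xi>\<bar> > k2 \<longrightarrow>
         ((b < -d \<or> d < a \<or> (a < -d \<and> d < b)) \<longrightarrow>
             R \<le> C / (1 + \<bar>\<xi>\<bar>) * exp (- B * \<bar>x - y\<bar>)) \<and>
         (\<not> (b < -d \<or> d < a \<or> (a < -d \<and> d < b)) \<longrightarrow>
             R \<le> C / (1 + \<bar>\<xi>\<bar>) * exp (- A * \<bar>x - y\<bar>))) \<and>
      (k1 < \<bar>\<xi>\<bar> \<and> \<bar>\<xi>\<bar> < k2 \<longrightarrow>
         R \<le> C * exp (- B * \<bar>x - y\<bar>) /
               (sqrt \<bar>\<xi>\<^sup>2 - k1\<^sup>2\<bar> * (\<Prod>\<zeta>\<in>wzeros k1 k2 d. \<bar>\<xi>\<^sup>2 - \<zeta>\<^sup>2\<bar>))) \<and>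
      (\<bar>\<xi>\<bar> < k1 \<longrightarrow> R \<le> C / sqrt \<bar>\<xi>\<^sup>2 - k1\<^sup>2\<bar>))"
proof -
  note k = assms(1,2) and d = assms(3)
  obtain Ca where Ca: "\<And>\<xi> a b. k2 < \<bar>\<xi>\<bar> \<Longrightarrow> a < b \<Longrightarrow>
     cmod (Fp (kappa k1 \<xi>) (kappa k2 \<xi>) d b) * cmod (Fp (kappa k1 \<xi>) (kappa k2 \<xi>) d (-a)) / cmod (wronsk k1 k2 d \<xi>)
       \<le> Ca / (1 + \<bar>\<xi>\<bar>) * exp (- sqrt (\<xi>\<^sup>2 - k2\<^sup>2) * (b - a)) \<and>
     ((b \<le> -d \<or> d \<le> a \<or> (a \<le> -d \<and> d \<le> b)) \<longrightarrow>
     cmod (Fp (kappa k1 \<xi>) (kappa k2 \<xi>) d b) * cmod (Fp (kappa k1 \<xi>) (kappa k2 \<xi>) d (-a)) / cmod (wronsk k1 k2 d \<xi>)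
       \<le> Ca / (1 + \<bar>\<xi>\<bar>) * exp (- sqrt (\<xi>\<^sup>2 - k1\<^sup>2) * (b - a)))"
    using rega_final[OF k d] by blast
  obtain Cb where Cb: "\<And>\<xi> a b. k1 < \<bar>\<xi>\<bar> \<Longrightarrow> \<bar>\<xi>\<bar> < k2 \<Longrightarrow> \<bar>\<xi>\<bar> \<notin> wzeros k1 k2 d \<Longrightarrow> a < b \<Longrightarrow>
     cmod (Fp (kappa k1 \<xi>) (kappa k2 \<xi>) d b) * cmod (Fp (kappa k1 \<xi>) (kappa k2 \<xi>) d (-a)) / cmod (wronsk k1 k2 d \<xi>)
       \<le> Cb * exp (- sqrt (\<xi>\<^sup>2 - k1\<^sup>2) * (b - a)) / (sqrt \<bar>\<xi>\<^sup>2 - k1\<^sup>2\<bar> * (\<Prod>\<zeta>\<in>wzeros k1 k2 d. \<bar>\<xi>\<^sup>2 - \<zeta>\<^sup>2\<bar>))"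
    using regb_final[OF k d] by blast
  obtain Cc where Cc: "\<And>\<xi> a b. \<bar>\<xi>\<bar> < k1 \<Longrightarrow> a < b \<Longrightarrow>
     cmod (Fp (kappa k1 \<xi>) (kappa k2 \<xi>) d b) * cmod (Fp (kappa k1 \<xi>) (kappa k2 \<xi>) d (-a)) / cmod (wronsk k1 k2 d \<xi>)
       \<le> Cc / sqrt \<bar>\<xi>\<^sup>2 - k1\<^sup>2\<bar>"
    using regc_final[OF k d] by blast
  define C where "C = \<bar>Ca\<bar> + \<bar>Cb\<bar> + \<bar>Cc\<bar>"
  have CaC: "Ca \<le> C" and CbC: "Cb \<le> C" and CcC: "Cc \<le> C" unfolding C_def by auto
  show ?thesis
  proof (intro exI[of _ C] allI impI)
    fix \<xi> x y :: real
    assume H: "\<bar>\<xi>\<bar> \<noteq> k1 \<and> \<bar>\<xi>\<bar> \<noteq> k2 \<and> \<bar>\<xi>\<bar> \<notin> wzeros k1 k2 d \<and> x \<noteq> y"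
    define a where "a = min x y"
    define b where "b = max x y"
    have ab: "a < b" using H unfolding a_def b_def by auto
    have xy: "\<bar>x - y\<bar> = b - a" unfolding a_def b_def by (auto simp: min_def max_def)
    define R where "R = cmod (resolv k1 k2 d \<xi> x y)"
    have R: "R = cmod (Fp (kappa k1 \<xi>) (kappa k2 \<xi>) d b) * cmod (Fp (kappa k1 \<xi>) (kappa k2 \<xi>) d (-a)) / cmod (wronsk k1 k2 d \<xi>)"
      unfolding R_def a_def b_def using resolv_eq[OF k d] H by (simp add: norm_mult norm_divide)
    have pa: "(k2 < \<bar>\<xi>\<bar> \<longrightarrow>
         ((b < -d \<or> d < a \<or> (a < -d \<and> d < b)) \<longrightarrow>
             R \<le> C / (1 + \<bar>\<xi>\<bar>) * exp (- sqrt (\<xi>\<^sup>2 - k1\<^sup>2) * \<bar>x - y\<bar>)) \<and>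
         (\<not> (b < -d \<or> d < a \<or> (a < -d \<and> d < b)) \<longrightarrow>
             R \<le> C / (1 + \<bar>\<xi>\<bar>) * exp (- sqrt (\<xi>\<^sup>2 - k2\<^sup>2) * \<bar>x - y\<bar>)))"
    proof (intro impI conjI)
      assume xi: "k2 < \<bar>\<xi>\<bar>"
      note h = Ca[OF xi ab, folded R]
      have m: "Ca / (1 + \<bar>\<xi>\<bar>) * e \<le> C / (1 + \<bar>\<xi>\<bar>) * e" if "0 \<le> e" for e
        using CaC that by (intro mult_right_mono divide_right_mono) auto
      show "R \<le> C / (1 + \<bar>\<xi>\<bar>) * exp (- sqrt (\<xi>\<^sup>2 - k2\<^sup>2) * \<bar>x - y\<bar>)"
        unfolding xy using h m[of "exp (- sqrt (\<xi>\<^sup>2 - k2\<^sup>2) * (b - a))"] by simp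
      assume o: "b < -d \<or> d < a \<or> (a < -d \<and> d < b)"
      then have o': "b \<le> -d \<or> d \<le> a \<or> (a \<le> -d \<and> d \<le> b)" by auto
      show "R \<le> C / (1 + \<bar>\<xi>\<bar>) * exp (- sqrt (\<xi>\<^sup>2 - k1\<^sup>2) * \<bar>x - y\<bar>)"
        unfolding xy using h o' m[of "exp (- sqrt (\<xi>\<^sup>2 - k1\<^sup>2) * (b - a))"] by simp
    qed
    have pb: "k1 < \<bar>\<xi>\<bar> \<and> \<bar>\<xi>\<bar> < k2 \<longrightarrow>
         R \<le> C * exp (- sqrt (\<xi>\<^sup>2 - k1\<^sup>2) * \<bar>x - y\<bar>) /
               (sqrt \<bar>\<xi>\<^sup>2 - k1\<^sup>2\<bar> * (\<Prod>\<zeta>\<in>wzeros k1 k2 d. \<bar>\<xi>\<^sup>2 - \<zeta>\<^sup>2\<bar>))"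
    proof
      assume xi: "k1 < \<bar>\<xi>\<bar> \<and> \<bar>\<xi>\<bar> < k2"
      note h = Cb[of \<xi> a b, folded R]
      have P0: "0 \<le> (\<Prod>\<zeta>\<in>wzeros k1 k2 d. \<bar>\<xi>\<^sup>2 - \<zeta>\<^sup>2\<bar>)" by (intro prod_nonneg) auto
      have "Cb * exp (- sqrt (\<xi>\<^sup>2 - k1\<^sup>2) * (b - a)) / (sqrt \<bar>\<xi>\<^sup>2 - k1\<^sup>2\<bar> * (\<Prod>\<zeta>\<in>wzeros k1 k2 d. \<bar>\<xi>\<^sup>2 - \<zeta>\<^sup>2\<bar>))
          \<le> C * exp (- sqrt (\<xi>\<^sup>2 - k1\<^sup>2) * (b - a)) / (sqrt \<bar>\<xi>\<^sup>2 - k1\<^sup>2\<bar> * (\<Prod>\<zeta>\<in>wzeros k1 k2 d. \<bar>\<xi>\<^sup>2 - \<zeta>\<^sup>2\<bar>))"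
        using CbC P0 by (intro divide_right_mono mult_right_mono) auto
      then show "R \<le> C * exp (- sqrt (\<xi>\<^sup>2 - k1\<^sup>2) * \<bar>x - y\<bar>) /
               (sqrt \<bar>\<xi>\<^sup>2 - k1\<^sup>2\<bar> * (\<Prod>\<zeta>\<in>wzeros k1 k2 d. \<bar>\<xi>\<^sup>2 - \<zeta>\<^sup>2\<bar>))"
        unfolding xy using h xi H ab by linarith
    qed
    have pc: "\<bar>\<xi>\<bar> < k1 \<longrightarrow> R \<le> C / sqrt \<bar>\<xi>\<^sup>2 - k1\<^sup>2\<bar>"
    proof
      assume xi: "\<bar>\<xi>\<bar> < k1"
      have "Cc / sqrt \<bar>\<xi>\<^sup>2 - k1\<^sup>2\<bar> \<le> C / sqrt \<bar>\<xi>\<^sup>2 - k1\<^sup>2\<bar>" using CcC by (intro divide_right_mono) auto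
      then show "R \<le> C / sqrt \<bar>\<xi>\<^sup>2 - k1\<^sup>2\<bar>" using Cc[OF xi ab, folded R] by linarith
    qed
    show "let a = min x y; b = max x y;
          A = sqrt (\<xi>\<^sup>2 - k2\<^sup>2); B = sqrt (\<xi>\<^sup>2 - k1\<^sup>2);
          R = cmod (resolv k1 k2 d \<xi> x y) in
      (\<bar>\<xi>\<bar> > k2 \<longrightarrow>
         ((b < -d \<or> d < a \<or> (a < -d \<and> d < b)) \<longrightarrow>
             R \<le> C / (1 + \<bar>\<xi>\<bar>) * exp (- B * \<bar>x - y\<bar>)) \<and>
         (\<not> (b < -d \<or> d < a \<or> (a < -d \<and> d < b)) \<longrightarrow>
             R \<le> C / (1 + \<bar>\<xi>\<bar>) * exp (- A * \<bar>x - y\<bar>))) \<and>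
      (k1 < \<bar>\<xi>\<bar> \<and> \<bar>\<xi>\<bar> < k2 \<longrightarrow>
         R \<le> C * exp (- B * \<bar>x - y\<bar>) /
               (sqrt \<bar>\<xi>\<^sup>2 - k1\<^sup>2\<bar> * (\<Prod>\<zeta>\<in>wzeros k1 k2 d. \<bar>\<xi>\<^sup>2 - \<zeta>\<^sup>2\<bar>))) \<and>
      (\<bar>\<xi>\<bar> < k1 \<longrightarrow> R \<le> C / sqrt \<bar>\<xi>\<^sup>2 - k1\<^sup>2\<bar>)"
      unfolding Let_def a_def[symmetric] b_def[symmetric] R_def[symmetric] using pa pb pc by blast
  qed
qed


end
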